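(* Let $G=(V,E)$ be a finite simple graph with $|V|=m$ and $|E|=n$ that has at least one sink-free orientation. Run the following sink-popping algorithm. Orient each edge independently and uniformly at random. While the current orientation has a sink, choose any sink $v$ (by any rule) and reorient every edge incident to $v$ independently and uniformly at random. Then: (i) the algorithm terminates with probability $1$, and the output is uniformly distributed over the sink-free orientations of $G$; (ii) the expected number of iterations (sinks popped) is at most $m^2=|V|^2$; (iii) the expected total number of edge reorientations is at most $2mn=2|V|\,|E|$. Here an edge is counted once per iteration in which it is re-randomised, whether or not its orientation changes.
   Context: An orientation of $G$ assigns a direction to every edge. A sink of an orientation is a vertex $v$ such that every edge incident to $v$ is directed towards $v$. An orientation is sink-free if it has no sink. *)

theory Defs
  imports "HOL-Probability.Probability"
begin

definition simple_graph :: "'a set \<Rightarrow> 'a set set \<Rightarrow> bool" where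
  "simple_graph V E \<longleftrightarrow> finite V \<and> (\<forall>e\<in>E. \<exists>u v. u \<in> V \<and> v \<in> V \<and> u \<noteq> v \<and> e = {u, v})"

(* An orientation assigns to every edge its head (the endpoint it points to). *)
definition orientations :: "'a set set \<Rightarrow> ('a set \<Rightarrow> 'a) set" where
  "orientations E = PiE E (\<lambda>e. e)"

definition is_sink :: "'a set set \<Rightarrow> ('a set \<Rightarrow> 'a) \<Rightarrow> 'a \<Rightarrow> bool" where
  "is_sink E \<sigma> v \<longleftrightarrow> (\<forall>e\<in>E. v \<in> e \<longrightarrow> \<sigma> e = v)"

definition has_sink :: "'a set \<Rightarrow> 'a set set \<Rightarrow> ('a set \<Rightarrow> 'a) \<Rightarrow> bool" where
  "has_sink V E \<sigma> \<longleftrightarrow> (\<exists>v\<in>V. is_sink E \<sigma> v)"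

definition sink_free_orientations :: "'a set \<Rightarrow> 'a set set \<Rightarrow> ('a set \<Rightarrow> 'a) set" where
  "sink_free_orientations V E = {\<sigma> \<in> orientations E. \<not> has_sink V E \<sigma>}"

definition random_orientation :: "'a set set \<Rightarrow> ('a set \<Rightarrow> 'a) pmf" where
  "random_orientation E = Pi_pmf E undefined (\<lambda>e. pmf_of_set e)"

definition pop :: "'a set set \<Rightarrow> ('a set \<Rightarrow> 'a) \<Rightarrow> 'a \<Rightarrow> ('a set \<Rightarrow> 'a) pmf" where
  "pop E \<sigma> v = Pi_pmf E undefined (\<lambda>e. if v \<in> e then pmf_of_set e else return_pmf (\<sigma> e))"

(* States are histories: list of orientations, most recent first.
   The sink-selection rule "sel" may depend on the whole history. *)
definition sp_step :: "'a set \<Rightarrow> 'a set set \<Rightarrow> (('a set \<Rightarrow> 'a) list \<Rightarrow> 'a)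
    \<Rightarrow> ('a set \<Rightarrow> 'a) list \<Rightarrow> ('a set \<Rightarrow> 'a) list pmf" where
  "sp_step V E sel h =
     (if has_sink V E (hd h) then map_pmf (\<lambda>\<sigma>'. \<sigma>' # h) (pop E (hd h) (sel h))
      else return_pmf h)"

fun sp_hist :: "'a set \<Rightarrow> 'a set set \<Rightarrow> (('a set \<Rightarrow> 'a) list \<Rightarrow> 'a)
    \<Rightarrow> nat \<Rightarrow> ('a set \<Rightarrow> 'a) list pmf" where
  "sp_hist V E sel 0 = map_pmf (\<lambda>\<sigma>. [\<sigma>]) (random_orientation E)"
| "sp_hist V E sel (Suc k) = bind_pmf (sp_hist V E sel k) (sp_step V E sel)"

definition degree :: "'a set set \<Rightarrow> 'a \<Rightarrow> nat" where
  "degree E v = card {e \<in> E. v \<in> e}"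

(* Number of edge re-randomisations during the pops recorded in history h:
   the i-th most recent pop happened at history (drop i h) at vertex sel (drop i h). *)
definition reorientations :: "'a set set \<Rightarrow> (('a set \<Rightarrow> 'a) list \<Rightarrow> 'a)
    \<Rightarrow> ('a set \<Rightarrow> 'a) list \<Rightarrow> nat" where
  "reorientations E sel h = (\<Sum>i\<in>{1..<length h}. degree E (sel (drop i h)))"

end

theory Submission
  imports Defs
begin

definition ex :: "'b pmf \<Rightarrow> ('b \<Rightarrow> real) \<Rightarrow> real" where
  "ex M g = measure_pmf.expectation M g"

lemma ex_finite_sum:
  assumes "finite A" "set_pmf M \<subseteq> A"
  shows "ex M g = (\<Sum>a\<in>A. pmf M a * g a)"
  unfolding ex_def
  by (subst integral_measure_pmf_real[OF assms(1)]) (use assms in \<open>auto simp: mult.commute\<close>)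

lemma ex_bind:
  assumes "finite (set_pmf M)" "\<And>x. x \<in> set_pmf M \<Longrightarrow> finite (set_pmf (N x))"
  shows "ex (bind_pmf M N) g = ex M (\<lambda>x. ex (N x) g)"
proof -
  let ?A = "set_pmf M"
  let ?B = "\<Union>x\<in>?A. set_pmf (N x)"
  have fB: "finite ?B" using assms by auto
  have sb: "set_pmf (bind_pmf M N) \<subseteq> ?B" by auto
  have "ex (bind_pmf M N) g = (\<Sum>b\<in>?B. pmf (bind_pmf M N) b * g b)"
    by (rule ex_finite_sum[OF fB sb])
  also have "\<dots> = (\<Sum>b\<in>?B. (\<Sum>a\<in>?A. pmf M a * pmf (N a) b) * g b)"
  proof (rule sum.cong[OF refl])
    fix b assume "b \<in> ?B"
    have "pmf (bind_pmf M N) b = ex M (\<lambda>x. pmf (N x) b)" by (simp add: pmf_bind ex_def)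
    also have "\<dots> = (\<Sum>a\<in>?A. pmf M a * pmf (N a) b)"
      by (rule ex_finite_sum) (use assms in auto)
    finally show "pmf (bind_pmf M N) b * g b = (\<Sum>a\<in>?A. pmf M a * pmf (N a) b) * g b" by simp
  qed
  also have "\<dots> = (\<Sum>a\<in>?A. pmf M a * (\<Sum>b\<in>?B. pmf (N a) b * g b))"
    by (simp add: sum_distrib_left sum_distrib_right mult.assoc sum.swap[of _ ?B])
  also have "\<dots> = (\<Sum>a\<in>?A. pmf M a * ex (N a) g)"
  proof (rule sum.cong[OF refl])
    fix a assume a: "a \<in> ?A"
    have "ex (N a) g = (\<Sum>b\<in>?B. pmf (N a) b * g b)"
      by (rule ex_finite_sum[OF fB]) (use a in auto)
    thus "pmf M a * (\<Sum>b\<in>?B. pmf (N a) b * g b) = pmf M a * ex (N a) g" by simp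
  qed
  also have "\<dots> = ex M (\<lambda>x. ex (N x) g)"
    by (rule ex_finite_sum[symmetric]) (use assms in auto)
  finally show ?thesis .
qed

lemma ex_return [simp]: "ex (return_pmf x) g = g x"
  by (simp add: ex_def)

lemma ex_cong:
  assumes "\<And>x. x \<in> set_pmf M \<Longrightarrow> f x = g x"
  shows "ex M f = ex M g"
  unfolding ex_def by (rule integral_cong_AE) (use assms in \<open>auto simp: AE_measure_pmf_iff\<close>)

lemma ex_mono:
  assumes "finite (set_pmf M)" "\<And>x. x \<in> set_pmf M \<Longrightarrow> f x \<le> g x"
  shows "ex M f \<le> ex M g"
proof -
  have "ex M f = (\<Sum>a\<in>set_pmf M. pmf M a * f a)" by (rule ex_finite_sum) (use assms in auto)
  also have "\<dots> \<le> (\<Sum>a\<in>set_pmf M. pmf M a * g a)"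
    by (intro sum_mono mult_left_mono) (use assms in auto)
  also have "\<dots> = ex M g" by (rule ex_finite_sum[symmetric]) (use assms in auto)
  finally show ?thesis .
qed

lemma ex_const: "ex M (\<lambda>_. c) = c"
  by (simp add: ex_def)

lemma ex_add:
  assumes "finite (set_pmf M)"
  shows "ex M (\<lambda>x. f x + g x) = ex M f + ex M g"
  using assms unfolding ex_def
  by (intro Bochner_Integration.integral_add) (auto intro: integrable_measure_pmf_finite)

lemma ex_cmult:
  shows "ex M (\<lambda>x. c * f x) = c * ex M f"
  unfolding ex_def by simp

lemma ex_sum:
  assumes "finite (set_pmf M)"
  shows "ex M (\<lambda>x. \<Sum>i\<in>I. f i x) = (\<Sum>i\<in>I. ex M (f i))"
  using assms unfolding ex_def
  by (intro Bochner_Integration.integral_sum) (auto intro: integrable_measure_pmf_finite)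

lemma ex_nonneg:
  assumes "\<And>x. x \<in> set_pmf M \<Longrightarrow> 0 \<le> f x"
  shows "0 \<le> ex M f"
  unfolding ex_def by (rule integral_nonneg_AE) (use assms in \<open>auto simp: AE_measure_pmf_iff\<close>)

locale sfo =
  fixes V :: "'a set" and E :: "'a set set"
  assumes sg: "simple_graph V E"
begin

lemma finV: "finite V" using sg by (simp add: simple_graph_def)

lemma edgeE: "e \<in> E \<Longrightarrow> \<exists>u v. u \<in> V \<and> v \<in> V \<and> u \<noteq> v \<and> e = {u, v}"
  using sg by (simp add: simple_graph_def)

lemma edge_sub: "e \<in> E \<Longrightarrow> e \<subseteq> V" using edgeE by blast

lemma finE: "finite E"
proof -
  have "E \<subseteq> Pow V" using edge_sub by blast
  thus ?thesis using finV by (meson finite_Pow_iff finite_subset)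
qed

lemma card_edge: "e \<in> E \<Longrightarrow> card e = 2" using edgeE by fastforce

lemma finite_edge: "e \<in> E \<Longrightarrow> finite e" using edgeE by fastforce

lemma edge_ne: "e \<in> E \<Longrightarrow> e \<noteq> {}" using edgeE by fastforce

abbreviation OR where "OR \<equiv> orientations E"

lemma OR_iff: "\<sigma> \<in> OR \<longleftrightarrow> (\<forall>e\<in>E. \<sigma> e \<in> e) \<and> (\<forall>e. e \<notin> E \<longrightarrow> \<sigma> e = undefined)"
  by (auto simp: orientations_def PiE_def extensional_def)

lemma finOR: "finite OR"
  unfolding orientations_def by (intro finite_PiE finE) (auto dest: finite_edge)

definition agree :: "'a \<Rightarrow> ('a set \<Rightarrow> 'a) \<Rightarrow> ('a set \<Rightarrow> 'a) \<Rightarrow> bool" where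
  "agree v \<sigma> \<sigma>' \<longleftrightarrow> (\<forall>e\<in>E. v \<notin> e \<longrightarrow> \<sigma>' e = \<sigma> e)"

lemma pmf_pop:
  assumes \<sigma>: "\<sigma> \<in> OR"
  shows "pmf (pop E \<sigma> v) \<sigma>' = (if \<sigma>' \<in> OR \<and> agree v \<sigma> \<sigma>' then (1/2) ^ degree E v else 0)"
proof (cases "\<forall>x. x \<notin> E \<longrightarrow> \<sigma>' x = undefined")
  case False
  hence "\<sigma>' \<notin> OR" by (auto simp: OR_iff)
  thus ?thesis using False unfolding pop_def by (subst pmf_Pi[OF finE]) auto
next
  case True
  define F where "F = (\<lambda>e. pmf (if v \<in> e then pmf_of_set e else return_pmf (\<sigma> e)) (\<sigma>' e))"
  have p: "pmf (pop E \<sigma> v) \<sigma>' = (\<Prod>e\<in>E. F e)"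
    unfolding pop_def F_def using True by (subst pmf_Pi[OF finE]) auto
  have Fe: "F e = (if v \<in> e then (if \<sigma>' e \<in> e then 1/2 else 0) else (if \<sigma>' e = \<sigma> e then 1 else 0))"
    if "e \<in> E" for e
    using that card_edge[OF that] finite_edge[OF that] edge_ne[OF that]
    by (auto simp: F_def pmf_of_set indicator_def)
  show ?thesis
  proof (cases "\<sigma>' \<in> OR \<and> agree v \<sigma> \<sigma>'")
    case True
    hence "\<forall>e\<in>E. F e = (if v \<in> e then 1/2 else 1)"
      using Fe \<sigma> by (auto simp: OR_iff agree_def)
    hence "(\<Prod>e\<in>E. F e) = (\<Prod>e\<in>E. (if v \<in> e then 1/2 else 1 :: real))"
      by (intro prod.cong) auto
    also have "\<dots> = (\<Prod>e\<in>{e\<in>E. v \<in> e}. 1/2)"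
      using prod.inter_filter[OF finE, of "\<lambda>_. 1/2::real" "\<lambda>e. v \<in> e"] by simp
    also have "\<dots> = (1/2) ^ degree E v" by (simp add: degree_def)
    finally show ?thesis using p True by simp
  next
    case False
    then obtain e where e: "e \<in> E" "F e = 0"
    proof -
      from False True have "\<exists>e\<in>E. \<not> (\<sigma>' e \<in> e \<and> (v \<notin> e \<longrightarrow> \<sigma>' e = \<sigma> e))"
        using \<sigma> by (auto simp: OR_iff agree_def)
      then obtain e where "e \<in> E" "\<not> (\<sigma>' e \<in> e \<and> (v \<notin> e \<longrightarrow> \<sigma>' e = \<sigma> e))" by blast
      with Fe[of e] \<sigma> show ?thesis using that by (auto simp: OR_iff split: if_splits)
    qed
    hence "(\<Prod>e\<in>E. F e) = 0" using finE by (intro prod_zero) auto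
    thus ?thesis using p False by simp
  qed
qed

lemma set_pop:
  assumes "\<sigma> \<in> OR"
  shows "set_pmf (pop E \<sigma> v) = {\<sigma>'\<in>OR. agree v \<sigma> \<sigma>'}"
  using pmf_pop[OF assms] by (auto simp: set_pmf_eq)

lemma finite_set_pop: "\<sigma> \<in> OR \<Longrightarrow> finite (set_pmf (pop E \<sigma> v))"
  using set_pop finOR by auto

lemma set_pop_OR: "\<sigma> \<in> OR \<Longrightarrow> \<sigma>' \<in> set_pmf (pop E \<sigma> v) \<Longrightarrow> \<sigma>' \<in> OR"
  using set_pop by auto

lemma ex_pop:
  assumes "\<sigma> \<in> OR"
  shows "ex (pop E \<sigma> v) g = (\<Sum>\<sigma>'\<in>{\<sigma>'\<in>OR. agree v \<sigma> \<sigma>'}. (1/2) ^ degree E v * g \<sigma>')"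
proof -
  have "ex (pop E \<sigma> v) g = (\<Sum>\<sigma>'\<in>{\<sigma>'\<in>OR. agree v \<sigma> \<sigma>'}. pmf (pop E \<sigma> v) \<sigma>' * g \<sigma>')"
    by (rule ex_finite_sum) (use finOR set_pop[OF assms] in auto)
  also have "\<dots> = (\<Sum>\<sigma>'\<in>{\<sigma>'\<in>OR. agree v \<sigma> \<sigma>'}. (1/2) ^ degree E v * g \<sigma>')"
    by (intro sum.cong) (auto simp: pmf_pop[OF assms])
  finally show ?thesis .
qed

lemma pmf_ro: "pmf (random_orientation E) \<sigma> = (if \<sigma> \<in> OR then (1/2) ^ card E else 0)"
proof (cases "\<forall>x. x \<notin> E \<longrightarrow> \<sigma> x = undefined")
  case False
  hence "\<sigma> \<notin> OR" by (auto simp: OR_iff)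
  thus ?thesis using False unfolding random_orientation_def by (subst pmf_Pi[OF finE]) auto
next
  case True
  have p: "pmf (random_orientation E) \<sigma> = (\<Prod>e\<in>E. pmf (pmf_of_set e) (\<sigma> e))"
    unfolding random_orientation_def using True by (subst pmf_Pi[OF finE]) auto
  have Fe: "pmf (pmf_of_set e) (\<sigma> e) = (if \<sigma> e \<in> e then 1/2 else 0)" if "e \<in> E" for e
    using that card_edge[OF that] finite_edge[OF that] edge_ne[OF that]
    by (auto simp: pmf_of_set indicator_def)
  show ?thesis
  proof (cases "\<sigma> \<in> OR")
    case True
    hence "(\<Prod>e\<in>E. pmf (pmf_of_set e) (\<sigma> e)) = (\<Prod>e\<in>E. 1/2)"
      using Fe by (intro prod.cong) (auto simp: OR_iff)
    thus ?thesis using p True by simp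
  next
    case False
    with True obtain e where "e \<in> E" "\<sigma> e \<notin> e" by (auto simp: OR_iff)
    hence "(\<Prod>e\<in>E. pmf (pmf_of_set e) (\<sigma> e)) = 0" using Fe finE by (intro prod_zero) auto
    thus ?thesis using p False by simp
  qed
qed

lemma set_ro: "set_pmf (random_orientation E) = OR"
  using pmf_ro by (auto simp: set_pmf_eq)

end

context sfo begin

definition sinks :: "('a set \<Rightarrow> 'a) \<Rightarrow> 'a set" where
  "sinks \<sigma> = {x\<in>V. is_sink E \<sigma> x}"

lemma has_sink_iff: "has_sink V E \<sigma> \<longleftrightarrow> sinks \<sigma> \<noteq> {}"
  by (auto simp: has_sink_def sinks_def)

definition valid :: "(('a set \<Rightarrow> 'a) \<Rightarrow> 'a) \<Rightarrow> bool" where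
  "valid f \<longleftrightarrow> (\<forall>\<sigma>. has_sink V E \<sigma> \<longrightarrow> f \<sigma> \<in> V \<and> is_sink E \<sigma> (f \<sigma>))"

lemma sinks_nonadj: "is_sink E \<sigma> a \<Longrightarrow> is_sink E \<sigma> b \<Longrightarrow> a \<noteq> b \<Longrightarrow> e \<in> E \<Longrightarrow> a \<in> e \<Longrightarrow> b \<notin> e"
  by (auto simp: is_sink_def)

lemma sink_stays:
  assumes "\<sigma> \<in> OR" "is_sink E \<sigma> w" "is_sink E \<sigma> a" "a \<noteq> w" "\<sigma>' \<in> set_pmf (pop E \<sigma> a)"
  shows "is_sink E \<sigma>' w"
proof -
  have ag: "agree a \<sigma> \<sigma>'" using set_pop[OF assms(1)] assms(5) by auto
  show ?thesis unfolding is_sink_def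
  proof (intro ballI impI)
    fix e assume e: "e \<in> E" "w \<in> e"
    hence "a \<notin> e" using sinks_nonadj[OF assms(2,3)] assms(4) by blast
    hence "\<sigma>' e = \<sigma> e" using ag e by (auto simp: agree_def)
    thus "\<sigma>' e = w" using assms(2) e by (auto simp: is_sink_def)
  qed
qed

lemma pmf_pop_pop:
  assumes \<sigma>: "\<sigma> \<in> OR" and nadj: "\<forall>e\<in>E. \<not> (a \<in> e \<and> b \<in> e)"
  shows "pmf (bind_pmf (pop E \<sigma> a) (\<lambda>\<sigma>1. pop E \<sigma>1 b)) \<sigma>2 =
    (if \<sigma>2 \<in> OR \<and> (\<forall>e\<in>E. a \<notin> e \<and> b \<notin> e \<longrightarrow> \<sigma>2 e = \<sigma> e)
     then (1/2) ^ degree E a * (1/2) ^ degree E b else 0)"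
proof -
  define C where "C = (\<sigma>2 \<in> OR \<and> (\<forall>e\<in>E. a \<notin> e \<and> b \<notin> e \<longrightarrow> \<sigma>2 e = \<sigma> e))"
  define mix where "mix = (\<lambda>e. if e \<in> E \<and> a \<in> e then \<sigma>2 e else \<sigma> e)"
  define S where "S = {\<sigma>1\<in>OR. agree a \<sigma> \<sigma>1 \<and> \<sigma>2 \<in> OR \<and> agree b \<sigma>1 \<sigma>2}"
  have S: "S = (if C then {mix} else {})"
  proof (cases C)
    case True
    have m1: "mix \<in> OR" unfolding OR_iff
    proof
      show "\<forall>e\<in>E. mix e \<in> e" using True \<sigma> unfolding C_def mix_def OR_iff by simp
      show "\<forall>e. e \<notin> E \<longrightarrow> mix e = undefined" using \<sigma> unfolding mix_def OR_iff by simp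
    qed
    have m2: "agree a \<sigma> mix" unfolding agree_def mix_def by simp
    have m3: "agree b mix \<sigma>2" unfolding agree_def
    proof (intro ballI impI)
      fix e assume e: "e \<in> E" "b \<notin> e"
      show "\<sigma>2 e = mix e"
      proof (cases "a \<in> e")
        case True thus ?thesis using e by (simp add: mix_def)
      next
        case False thus ?thesis using e \<open>C\<close> by (simp add: mix_def C_def)
      qed
    qed
    have mS: "mix \<in> S" using m1 m2 m3 True unfolding S_def C_def by simp
    have uq: "\<sigma>1 = mix" if "\<sigma>1 \<in> S" for \<sigma>1
    proof
      fix e
      have s1: "\<sigma>1 \<in> OR" "agree a \<sigma> \<sigma>1" "agree b \<sigma>1 \<sigma>2" using that unfolding S_def by auto
      show "\<sigma>1 e = mix e"
      proof (cases "e \<in> E")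
        case False thus ?thesis using s1(1) \<sigma> unfolding mix_def OR_iff by simp
      next
        case eE: True
        show ?thesis
        proof (cases "a \<in> e")
          case True
          hence "b \<notin> e" using nadj eE by blast
          thus ?thesis using s1(3) eE True unfolding agree_def mix_def by simp
        next
          case False thus ?thesis using s1(2) eE unfolding agree_def mix_def by simp
        qed
      qed
    qed
    have "S = {mix}"
    proof (intro equalityI subsetI)
      fix x assume "x \<in> S" thus "x \<in> {mix}" using uq by blast
    next
      fix x assume "x \<in> {mix}" thus "x \<in> S" using mS by simp
    qed
    thus ?thesis using True by simp
  next
    case False
    have "\<not> (\<sigma>1 \<in> S)" for \<sigma>1
    proof
      assume "\<sigma>1 \<in> S"
      hence s1: "\<sigma>1 \<in> OR" "agree a \<sigma> \<sigma>1" "\<sigma>2 \<in> OR" "agree b \<sigma>1 \<sigma>2" unfolding S_def by auto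
      have "\<forall>e\<in>E. a \<notin> e \<and> b \<notin> e \<longrightarrow> \<sigma>2 e = \<sigma> e"
        using s1(2,4) unfolding agree_def by simp
      hence "C" using s1(3) unfolding C_def by simp
      thus False using False by simp
    qed
    hence "S = {}" by (intro equals0I) simp
    thus ?thesis using False by simp
  qed
  have "pmf (bind_pmf (pop E \<sigma> a) (\<lambda>\<sigma>1. pop E \<sigma>1 b)) \<sigma>2 = ex (pop E \<sigma> a) (\<lambda>\<sigma>1. pmf (pop E \<sigma>1 b) \<sigma>2)"
    unfolding ex_def by (rule pmf_bind)
  also have "\<dots> = (\<Sum>\<sigma>1\<in>{\<sigma>1\<in>OR. agree a \<sigma> \<sigma>1}. (1/2) ^ degree E a * pmf (pop E \<sigma>1 b) \<sigma>2)"
    by (rule ex_pop[OF \<sigma>])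
  also have "\<dots> = (\<Sum>\<sigma>1\<in>{\<sigma>1\<in>OR. agree a \<sigma> \<sigma>1}. (if \<sigma>2 \<in> OR \<and> agree b \<sigma>1 \<sigma>2 then (1/2) ^ degree E a * (1/2) ^ degree E b else 0))"
  proof (rule sum.cong[OF refl])
    fix \<sigma>1 assume "\<sigma>1 \<in> {\<sigma>1\<in>OR. agree a \<sigma> \<sigma>1}"
    hence "\<sigma>1 \<in> OR" by simp
    thus "(1/2) ^ degree E a * pmf (pop E \<sigma>1 b) \<sigma>2 = (if \<sigma>2 \<in> OR \<and> agree b \<sigma>1 \<sigma>2 then (1/2) ^ degree E a * (1/2) ^ degree E b else 0)"
      by (simp add: pmf_pop)
  qed
  also have "\<dots> = (\<Sum>\<sigma>1\<in>{\<sigma>1 \<in> {\<sigma>1\<in>OR. agree a \<sigma> \<sigma>1}. \<sigma>2 \<in> OR \<and> agree b \<sigma>1 \<sigma>2}. (1/2) ^ degree E a * (1/2) ^ degree E b)"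
    by (rule sum.inter_filter[symmetric]) (simp add: finOR)
  also have "\<dots> = (\<Sum>\<sigma>1\<in>S. (1/2) ^ degree E a * (1/2) ^ degree E b)"
    by (rule sum.cong) (auto simp: S_def)
  also have "\<dots> = (if C then (1/2) ^ degree E a * (1/2) ^ degree E b else 0)"
    by (simp add: S)
  finally show ?thesis unfolding C_def .
qed

lemma pop_comm:
  assumes \<sigma>: "\<sigma> \<in> OR" and nadj: "\<forall>e\<in>E. \<not> (a \<in> e \<and> b \<in> e)"
  shows "bind_pmf (pop E \<sigma> a) (\<lambda>\<sigma>1. pop E \<sigma>1 b) = bind_pmf (pop E \<sigma> b) (\<lambda>\<sigma>1. pop E \<sigma>1 a)"
proof (rule pmf_eqI)
  fix \<sigma>2
  have nadj': "\<forall>e\<in>E. \<not> (b \<in> e \<and> a \<in> e)" using nadj by blast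
  show "pmf (bind_pmf (pop E \<sigma> a) (\<lambda>\<sigma>1. pop E \<sigma>1 b)) \<sigma>2 = pmf (bind_pmf (pop E \<sigma> b) (\<lambda>\<sigma>1. pop E \<sigma>1 a)) \<sigma>2"
    unfolding pmf_pop_pop[OF \<sigma> nadj] pmf_pop_pop[OF \<sigma> nadj'] by (auto simp: mult.commute)
qed

lemma ex_pop_pop:
  assumes "\<sigma> \<in> OR"
  shows "ex (pop E \<sigma> a) (\<lambda>\<sigma>1. ex (pop E \<sigma>1 b) g) = ex (bind_pmf (pop E \<sigma> a) (\<lambda>\<sigma>1. pop E \<sigma>1 b)) g"
  by (rule ex_bind[symmetric]) (use assms finite_set_pop set_pop_OR in auto)

fun val :: "(('a set \<Rightarrow> 'a) \<Rightarrow> 'a) \<Rightarrow> ('a \<Rightarrow> real) \<Rightarrow> (('a set \<Rightarrow> 'a) \<Rightarrow> real \<Rightarrow> real)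
    \<Rightarrow> nat \<Rightarrow> ('a set \<Rightarrow> 'a) \<Rightarrow> real \<Rightarrow> real" where
  "val f c \<phi> 0 \<sigma> a = \<phi> \<sigma> a"
| "val f c \<phi> (Suc k) \<sigma> a = (if has_sink V E \<sigma>
     then ex (pop E \<sigma> (f \<sigma>)) (\<lambda>\<sigma>'. val f c \<phi> k \<sigma>' (a + c (f \<sigma>))) else \<phi> \<sigma> a)"

lemma val_SF: "\<not> has_sink V E \<sigma> \<Longrightarrow> val f c \<phi> k \<sigma> a = \<phi> \<sigma> a"
  by (cases k) auto

lemma diamond:
  assumes f: "valid f" and \<phi>: "\<And>\<sigma> a. has_sink V E \<sigma> \<Longrightarrow> \<phi> \<sigma> a = 0"
  shows "\<sigma> \<in> OR \<Longrightarrow> w \<in> V \<Longrightarrow> is_sink E \<sigma> w \<Longrightarrow>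
    val f c \<phi> (Suc k) \<sigma> a = ex (pop E \<sigma> w) (\<lambda>\<sigma>'. val f c \<phi> k \<sigma>' (a + c w))"
proof (induction k arbitrary: \<sigma> a w)
  case 0
  have hs: "has_sink V E \<sigma>" using 0 by (auto simp: has_sink_def)
  hence fs: "f \<sigma> \<in> V" "is_sink E \<sigma> (f \<sigma>)" using f by (auto simp: valid_def)
  show ?case
  proof (cases "f \<sigma> = w")
    case True thus ?thesis using hs by simp
  next
    case False
    have "ex (pop E \<sigma> (f \<sigma>)) (\<lambda>\<sigma>'. \<phi> \<sigma>' (a + c (f \<sigma>))) = ex (pop E \<sigma> (f \<sigma>)) (\<lambda>_. 0)"
    proof (rule ex_cong)
      fix \<sigma>' assume "\<sigma>' \<in> set_pmf (pop E \<sigma> (f \<sigma>))"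
      hence "is_sink E \<sigma>' w" using sink_stays[OF 0(1) 0(3) fs(2)] False by blast
      hence "has_sink V E \<sigma>'" using 0(2) by (auto simp: has_sink_def)
      thus "\<phi> \<sigma>' (a + c (f \<sigma>)) = 0" by (rule \<phi>)
    qed
    moreover have "ex (pop E \<sigma> w) (\<lambda>\<sigma>'. \<phi> \<sigma>' (a + c w)) = ex (pop E \<sigma> w) (\<lambda>_. 0)"
    proof (rule ex_cong)
      fix \<sigma>' assume "\<sigma>' \<in> set_pmf (pop E \<sigma> w)"
      hence "is_sink E \<sigma>' (f \<sigma>)" using sink_stays[OF 0(1) fs(2) 0(3)] False by blast
      hence "has_sink V E \<sigma>'" using fs(1) by (auto simp: has_sink_def)
      thus "\<phi> \<sigma>' (a + c w) = 0" by (rule \<phi>)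
    qed
    ultimately show ?thesis using hs by (simp add: ex_const)
  qed
next
  case (Suc k)
  have hs: "has_sink V E \<sigma>" using Suc by (auto simp: has_sink_def)
  hence fs: "f \<sigma> \<in> V" "is_sink E \<sigma> (f \<sigma>)" using f by (auto simp: valid_def)
  show ?case
  proof (cases "f \<sigma> = w")
    case True thus ?thesis using hs by simp
  next
    case False
    let ?g = "\<lambda>\<sigma>2. val f c \<phi> k \<sigma>2 (a + c (f \<sigma>) + c w)"
    have nadj: "\<forall>e\<in>E. \<not> (f \<sigma> \<in> e \<and> w \<in> e)"
      using sinks_nonadj[OF fs(2) Suc(4)] False by blast
    have "val f c \<phi> (Suc (Suc k)) \<sigma> a = ex (pop E \<sigma> (f \<sigma>)) (\<lambda>\<sigma>1. val f c \<phi> (Suc k) \<sigma>1 (a + c (f \<sigma>)))"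
      using hs by simp
    also have "\<dots> = ex (pop E \<sigma> (f \<sigma>)) (\<lambda>\<sigma>1. ex (pop E \<sigma>1 w) ?g)"
    proof (rule ex_cong)
      fix \<sigma>1 assume s1: "\<sigma>1 \<in> set_pmf (pop E \<sigma> (f \<sigma>))"
      have "is_sink E \<sigma>1 w" using sink_stays[OF Suc(2) Suc(4) fs(2)] False s1 by blast
      thus "val f c \<phi> (Suc k) \<sigma>1 (a + c (f \<sigma>)) = ex (pop E \<sigma>1 w) ?g"
        by (rule Suc.IH[OF set_pop_OR[OF Suc(2) s1] Suc(3)])
    qed
    also have "\<dots> = ex (bind_pmf (pop E \<sigma> (f \<sigma>)) (\<lambda>\<sigma>1. pop E \<sigma>1 w)) ?g"
      by (rule ex_pop_pop[OF Suc(2)])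
    also have "\<dots> = ex (bind_pmf (pop E \<sigma> w) (\<lambda>\<sigma>1. pop E \<sigma>1 (f \<sigma>))) ?g"
      by (simp add: pop_comm[OF Suc(2) nadj])
    also have "\<dots> = ex (pop E \<sigma> w) (\<lambda>\<sigma>1. ex (pop E \<sigma>1 (f \<sigma>)) ?g)"
      by (rule ex_pop_pop[symmetric, OF Suc(2)])
    also have "\<dots> = ex (pop E \<sigma> w) (\<lambda>\<sigma>1. val f c \<phi> (Suc k) \<sigma>1 (a + c w))"
    proof (rule ex_cong)
      fix \<sigma>1 assume s1: "\<sigma>1 \<in> set_pmf (pop E \<sigma> w)"
      have "is_sink E \<sigma>1 (f \<sigma>)" using sink_stays[OF Suc(2) fs(2) Suc(4)] False s1 by blast
      hence "val f c \<phi> (Suc k) \<sigma>1 (a + c w) = ex (pop E \<sigma>1 (f \<sigma>)) (\<lambda>\<sigma>2. val f c \<phi> k \<sigma>2 (a + c w + c (f \<sigma>)))"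
        by (rule Suc.IH[OF set_pop_OR[OF Suc(2) s1] fs(1)])
      moreover have "a + c w + c (f \<sigma>) = a + c (f \<sigma>) + c w" by simp
      ultimately show "ex (pop E \<sigma>1 (f \<sigma>)) ?g = val f c \<phi> (Suc k) \<sigma>1 (a + c w)"
        by simp
    qed
    finally show ?thesis .
  qed
qed

end

lemma ex_map: "ex (map_pmf g M) F = ex M (\<lambda>x. F (g x))"
  by (simp add: ex_def)

context sfo begin

definition costh :: "(('a set \<Rightarrow> 'a) list \<Rightarrow> 'a) \<Rightarrow> ('a \<Rightarrow> real) \<Rightarrow> ('a set \<Rightarrow> 'a) list \<Rightarrow> real" where
  "costh sel c h = (\<Sum>i\<in>{1..<length h}. c (sel (drop i h)))"

lemma costh_Cons:
  assumes "h \<noteq> []"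
  shows "costh sel c (x # h) = c (sel h) + costh sel c h"
proof -
  obtain n where n: "length h = Suc n" using assms by (cases h) auto
  have "costh sel c (x # h) = (\<Sum>i\<in>{1..<Suc (Suc n)}. c (sel (drop i (x # h))))"
    by (simp add: costh_def n)
  also have "\<dots> = c (sel (drop 1 (x # h))) + (\<Sum>i\<in>{Suc 1..<Suc (Suc n)}. c (sel (drop i (x # h))))"
    by (subst sum.atLeast_Suc_lessThan) auto
  also have "(\<Sum>i\<in>{Suc 1..<Suc (Suc n)}. c (sel (drop i (x # h)))) = (\<Sum>i\<in>{1..<Suc n}. c (sel (drop (Suc i) (x # h))))"
    by (rule sum.shift_bounds_Suc_ivl)
  also have "\<dots> = costh sel c h" by (simp add: costh_def n)
  finally show ?thesis by simp
qed

lemma costh_single [simp]: "costh sel c [x] = 0"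
  by (simp add: costh_def)

definition hinv :: "('a set \<Rightarrow> 'a) list \<Rightarrow> bool" where
  "hinv h \<longleftrightarrow> h \<noteq> [] \<and> hd h \<in> OR \<and> (\<forall>i\<in>{1..<length h}. has_sink V E (hd (drop i h)))"

lemma set_sp_step:
  assumes "hinv h"
  shows "set_pmf (sp_step V E sel h) \<subseteq> {h'. hinv h'}"
proof
  fix h' assume h': "h' \<in> set_pmf (sp_step V E sel h)"
  show "h' \<in> {h'. hinv h'}"
  proof (cases "has_sink V E (hd h)")
    case False thus ?thesis using h' assms by (simp add: sp_step_def)
  next
    case True
    then obtain \<sigma>' where s: "\<sigma>' \<in> set_pmf (pop E (hd h) (sel h))" "h' = \<sigma>' # h"
      using h' by (auto simp: sp_step_def)
    have "\<sigma>' \<in> OR" using set_pop_OR s(1) assms by (auto simp: hinv_def)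
    moreover have "has_sink V E (hd (drop i (\<sigma>' # h)))" if "i \<in> {1..<length (\<sigma>' # h)}" for i
    proof (cases "i = 1")
      case True thus ?thesis using \<open>has_sink V E (hd h)\<close> by simp
    next
      case False
      define j where "j = i - 1"
      have j: "i = Suc j" "j \<in> {1..<length h}" using that False by (auto simp: j_def)
      thus ?thesis using assms by (auto simp: hinv_def)
    qed
    ultimately show ?thesis using s(2) by (auto simp: hinv_def)
  qed
qed

lemma finite_sp_step:
  assumes "hinv h"
  shows "finite (set_pmf (sp_step V E sel h))"
proof (cases "has_sink V E (hd h)")
  case True
  have "hd h \<in> OR" using assms by (simp add: hinv_def)
  thus ?thesis using True finite_set_pop by (simp add: sp_step_def)
qed (simp add: sp_step_def)

lemma sp_hist_inv: "h \<in> set_pmf (sp_hist V E sel j) \<Longrightarrow> hinv h"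
proof (induction j arbitrary: h)
  case 0 thus ?case by (auto simp: set_ro hinv_def)
next
  case (Suc j)
  then obtain h0 where "h0 \<in> set_pmf (sp_hist V E sel j)" "h \<in> set_pmf (sp_step V E sel h0)" by auto
  thus ?case using Suc.IH set_sp_step by blast
qed

lemma finite_sp_hist: "finite (set_pmf (sp_hist V E sel j))"
proof (induction j)
  case 0 thus ?case using finOR by (simp add: set_ro)
next
  case (Suc j)
  have "set_pmf (sp_hist V E sel (Suc j)) = (\<Union>h\<in>set_pmf (sp_hist V E sel j). set_pmf (sp_step V E sel h))"
    by simp
  thus ?case using Suc finite_sp_step sp_hist_inv by auto
qed

lemma bridge:
  assumes f: "valid f" and \<phi>: "\<And>\<sigma> a. has_sink V E \<sigma> \<Longrightarrow> \<phi> \<sigma> a = 0"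
    and sel: "\<forall>h. has_sink V E (hd h) \<longrightarrow> sel h \<in> V \<and> is_sink E (hd h) (sel h)"
  shows "ex (sp_hist V E sel j) (\<lambda>h. val f c \<phi> k (hd h) (costh sel c h)) =
         ex (random_orientation E) (\<lambda>\<sigma>. val f c \<phi> (j + k) \<sigma> 0)"
proof (induction j arbitrary: k)
  case 0
  show ?case by (simp add: ex_map)
next
  case (Suc j)
  have "ex (sp_hist V E sel (Suc j)) (\<lambda>h. val f c \<phi> k (hd h) (costh sel c h)) =
        ex (sp_hist V E sel j) (\<lambda>h. ex (sp_step V E sel h) (\<lambda>h. val f c \<phi> k (hd h) (costh sel c h)))"
    by (simp only: sp_hist.simps, rule ex_bind) (use finite_sp_hist finite_sp_step sp_hist_inv in auto)
  also have "\<dots> = ex (sp_hist V E sel j) (\<lambda>h. val f c \<phi> (Suc k) (hd h) (costh sel c h))"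
  proof (rule ex_cong)
    fix h assume h: "h \<in> set_pmf (sp_hist V E sel j)"
    hence hi: "hinv h" by (rule sp_hist_inv)
    show "ex (sp_step V E sel h) (\<lambda>h. val f c \<phi> k (hd h) (costh sel c h)) = val f c \<phi> (Suc k) (hd h) (costh sel c h)"
    proof (cases "has_sink V E (hd h)")
      case False thus ?thesis by (simp add: sp_step_def val_SF)
    next
      case True
      have hne: "h \<noteq> []" and hO: "hd h \<in> OR" using hi by (auto simp: hinv_def)
      have "ex (sp_step V E sel h) (\<lambda>h. val f c \<phi> k (hd h) (costh sel c h)) =
            ex (pop E (hd h) (sel h)) (\<lambda>\<sigma>'. val f c \<phi> k \<sigma>' (costh sel c (\<sigma>' # h)))"
        using True by (simp add: sp_step_def ex_map)
      also have "\<dots> = ex (pop E (hd h) (sel h)) (\<lambda>\<sigma>'. val f c \<phi> k \<sigma>' (costh sel c h + c (sel h)))"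
        by (simp add: costh_Cons[OF hne] add.commute)
      also have "\<dots> = val f c \<phi> (Suc k) (hd h) (costh sel c h)"
        using True sel by (intro diamond[symmetric, OF f \<phi> hO]) auto
      finally show ?thesis .
    qed
  qed
  also have "\<dots> = ex (random_orientation E) (\<lambda>\<sigma>. val f c \<phi> (Suc j + k) \<sigma> 0)"
    using Suc.IH[of "Suc k"] by simp
  finally show ?case .
qed

end

lemma ex_diff:
  assumes "finite (set_pmf M)"
  shows "ex M (\<lambda>x. f x - g x) = ex M f - ex M g"
  using assms unfolding ex_def
  by (intro Bochner_Integration.integral_diff) (auto intro: integrable_measure_pmf_finite)

context sfo begin

definition phit :: "('a set \<Rightarrow> 'a) \<Rightarrow> real \<Rightarrow> real" where
  "phit \<sigma> a = (if has_sink V E \<sigma> then 0 else 1)"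

definition Pt :: "(('a set \<Rightarrow> 'a) \<Rightarrow> 'a) \<Rightarrow> nat \<Rightarrow> ('a set \<Rightarrow> 'a) \<Rightarrow> real" where
  "Pt f k \<sigma> = val f (\<lambda>_. 0) phit k \<sigma> 0"

lemma val_phit: "val f c phit k \<sigma> a = Pt f k \<sigma>"
  unfolding Pt_def
proof (induction k arbitrary: \<sigma> a)
  case 0 thus ?case by (simp add: phit_def)
next
  case (Suc k)
  show ?case using Suc.IH[where a = "a + c (f \<sigma>)"] Suc.IH[where a = 0] by (simp add: phit_def)
qed

lemma Pt_Suc: "has_sink V E \<sigma> \<Longrightarrow> Pt f (Suc k) \<sigma> = ex (pop E \<sigma> (f \<sigma>)) (Pt f k)"
  unfolding Pt_def by simp

lemma Pt_SF: "\<not> has_sink V E \<sigma> \<Longrightarrow> Pt f k \<sigma> = 1"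
  unfolding Pt_def by (simp add: val_SF phit_def)

lemma Pt_0: "Pt f 0 \<sigma> = (if has_sink V E \<sigma> then 0 else 1)"
  unfolding Pt_def by (simp add: phit_def)

lemma Pt_bounds: "\<sigma> \<in> OR \<Longrightarrow> 0 \<le> Pt f k \<sigma> \<and> Pt f k \<sigma> \<le> 1"
proof (induction k arbitrary: \<sigma>)
  case 0 thus ?case by (simp add: Pt_0)
next
  case (Suc k)
  show ?case
  proof (cases "has_sink V E \<sigma>")
    case False thus ?thesis by (simp add: Pt_SF)
  next
    case True
    have "0 \<le> ex (pop E \<sigma> (f \<sigma>)) (Pt f k)"
      by (rule ex_nonneg) (use Suc set_pop_OR in blast)
    moreover have "ex (pop E \<sigma> (f \<sigma>)) (Pt f k) \<le> ex (pop E \<sigma> (f \<sigma>)) (\<lambda>_. 1)"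
      by (rule ex_mono) (use Suc set_pop_OR finite_set_pop in blast)+
    ultimately show ?thesis using True by (simp add: Pt_Suc ex_const)
  qed
qed

definition dis :: "('a set \<Rightarrow> 'a) \<Rightarrow> ('a set \<Rightarrow> 'a) \<Rightarrow> nat" where
  "dis \<tau> \<sigma> = card {e\<in>E. \<sigma> e \<noteq> \<tau> e}"

lemma dis_le: "dis \<tau> \<sigma> \<le> card E"
  unfolding dis_def by (rule card_mono[OF finE]) auto

lemma Pt_lower:
  assumes f: "valid f" and \<tau>: "\<tau> \<in> sink_free_orientations V E"
  shows "\<sigma> \<in> OR \<Longrightarrow> dis \<tau> \<sigma> \<le> k \<Longrightarrow> ((1/2) ^ card E) ^ dis \<tau> \<sigma> \<le> Pt f k \<sigma>"
proof (induction "dis \<tau> \<sigma>" arbitrary: \<sigma> k rule: less_induct)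
  case less
  let ?q = "(1/2::real) ^ card E"
  have q01: "0 \<le> ?q" "?q \<le> 1" by (auto simp: power_le_one)
  show ?case
  proof (cases "has_sink V E \<sigma>")
    case False thus ?thesis using q01 by (simp add: Pt_SF power_le_one)
  next
    case True
    define v where "v = f \<sigma>"
    have v: "v \<in> V" "is_sink E \<sigma> v" using f True by (auto simp: valid_def v_def)
    have \<tau>O: "\<tau> \<in> OR" and \<tau>sf: "\<not> is_sink E \<tau> v"
      using \<tau> v(1) by (auto simp: sink_free_orientations_def has_sink_def)
    then obtain e0 where e0: "e0 \<in> E" "v \<in> e0" "\<tau> e0 \<noteq> v" by (auto simp: is_sink_def)
    have se0: "\<sigma> e0 = v" using v(2) e0 by (auto simp: is_sink_def)
    define \<sigma>s where "\<sigma>s = (\<lambda>e. if e \<in> E then (if v \<in> e then \<tau> e else \<sigma> e) else undefined)"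
    have \<sigma>sO: "\<sigma>s \<in> OR" using less(2) \<tau>O by (auto simp: OR_iff \<sigma>s_def)
    have \<sigma>sag: "agree v \<sigma> \<sigma>s" by (auto simp: agree_def \<sigma>s_def)
    have sub: "{e\<in>E. \<sigma>s e \<noteq> \<tau> e} \<subseteq> {e\<in>E. \<sigma> e \<noteq> \<tau> e} - {e0}"
      using e0 by (auto simp: \<sigma>s_def)
    have e0in: "e0 \<in> {e\<in>E. \<sigma> e \<noteq> \<tau> e}" using e0 se0 by auto
    have dlt: "dis \<tau> \<sigma>s < dis \<tau> \<sigma>"
    proof -
      have "dis \<tau> \<sigma>s \<le> card ({e\<in>E. \<sigma> e \<noteq> \<tau> e} - {e0})"
        unfolding dis_def by (rule card_mono[OF _ sub]) (use finE in auto)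
      also have "\<dots> < dis \<tau> \<sigma>" unfolding dis_def
        by (rule card_Diff1_less) (use finE e0in in auto)
      finally show ?thesis .
    qed
    have dpos: "0 < dis \<tau> \<sigma>" using dlt by simp
    then obtain k' where k: "k = Suc k'" using less(3) by (cases k) auto
    have IH: "?q ^ dis \<tau> \<sigma>s \<le> Pt f k' \<sigma>s"
      using less(1)[OF dlt \<sigma>sO] less(3) dlt k by simp
    have "Pt f k \<sigma> = (\<Sum>\<sigma>'\<in>{\<sigma>'\<in>OR. agree v \<sigma> \<sigma>'}. (1/2) ^ degree E v * Pt f k' \<sigma>')"
      using True k by (simp add: Pt_Suc v_def ex_pop[OF less(2)])
    also have "\<dots> \<ge> (1/2) ^ degree E v * Pt f k' \<sigma>s"
      by (rule member_le_sum) (use \<sigma>sO \<sigma>sag Pt_bounds finOR in auto)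
    finally have A: "(1/2) ^ degree E v * Pt f k' \<sigma>s \<le> Pt f k \<sigma>" .
    have degle: "degree E v \<le> card E" unfolding degree_def by (rule card_mono[OF finE]) auto
    have B: "?q \<le> (1/2::real) ^ degree E v" by (rule power_decreasing[OF degle]) auto
    have C: "?q ^ dis \<tau> \<sigma> \<le> ?q * ?q ^ dis \<tau> \<sigma>s"
    proof -
      have "?q ^ dis \<tau> \<sigma> = ?q * ?q ^ (dis \<tau> \<sigma> - 1)" using dpos by (cases "dis \<tau> \<sigma>") auto
      also have "?q ^ (dis \<tau> \<sigma> - 1) \<le> ?q ^ dis \<tau> \<sigma>s"
        by (rule power_decreasing) (use dlt q01 in auto)
      finally show ?thesis using q01 by (simp add: mult_left_mono)
    qed
    have "?q * ?q ^ dis \<tau> \<sigma>s \<le> (1/2) ^ degree E v * Pt f k' \<sigma>s"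
      by (rule mult_mono[OF B IH]) (use q01 in auto)
    thus ?thesis using A C by linarith
  qed
qed

lemma Pt_mult:
  assumes r: "\<forall>\<sigma>\<in>OR. 1 - Pt f m \<sigma> \<le> r" and r0: "0 \<le> r"
  shows "\<sigma> \<in> OR \<Longrightarrow> 1 - Pt f (k + m) \<sigma> \<le> r * (1 - Pt f k \<sigma>)"
proof (induction k arbitrary: \<sigma>)
  case 0 thus ?case using r by (cases "has_sink V E \<sigma>") (auto simp: Pt_0 Pt_SF)
next
  case (Suc k)
  show ?case
  proof (cases "has_sink V E \<sigma>")
    case False thus ?thesis by (simp add: Pt_SF)
  next
    case True
    let ?M = "pop E \<sigma> (f \<sigma>)"
    have fin: "finite (set_pmf ?M)" using finite_set_pop Suc(2) by blast
    have "1 - Pt f (Suc k + m) \<sigma> = ex ?M (\<lambda>x. 1 - Pt f (k + m) x)"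
      using True by (simp add: Pt_Suc ex_diff[OF fin] ex_const)
    also have "\<dots> \<le> ex ?M (\<lambda>x. r * (1 - Pt f k x))"
      by (rule ex_mono[OF fin]) (use Suc.IH set_pop_OR Suc(2) in blast)
    also have "\<dots> = r * (1 - Pt f (Suc k) \<sigma>)"
      using True by (simp add: Pt_Suc ex_diff[OF fin] ex_const ex_cmult)
    finally show ?thesis .
  qed
qed

definition NN where "NN = card E + 1"
definition dd where "dd = ((1/2::real) ^ card E) ^ card E"

lemma dd_pos: "0 < dd" "dd \<le> 1" by (auto simp: dd_def power_le_one)

lemma Pt_decay:
  assumes f: "valid f" and SF: "sink_free_orientations V E \<noteq> {}"
  shows "\<sigma> \<in> OR \<Longrightarrow> 1 - Pt f k \<sigma> \<le> (1 - dd) ^ (k div NN)"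
proof -
  obtain \<tau> where \<tau>: "\<tau> \<in> sink_free_orientations V E" using SF by blast
  have blk: "\<forall>\<sigma>\<in>OR. 1 - Pt f NN \<sigma> \<le> 1 - dd"
  proof
    fix \<sigma> assume \<sigma>: "\<sigma> \<in> OR"
    have "((1/2) ^ card E) ^ dis \<tau> \<sigma> \<le> Pt f NN \<sigma>"
      by (rule Pt_lower[OF f \<tau> \<sigma>]) (use dis_le[of \<tau> \<sigma>] in \<open>simp add: NN_def\<close>)
    moreover have "dd \<le> ((1/2) ^ card E) ^ dis \<tau> \<sigma>"
      unfolding dd_def by (rule power_decreasing[OF dis_le]) (auto simp: power_le_one)
    ultimately show "1 - Pt f NN \<sigma> \<le> 1 - dd" by linarith
  qed
  have one: "\<forall>\<sigma>\<in>OR. 1 - Pt f 1 \<sigma> \<le> 1" using Pt_bounds by force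
  have mono: "\<sigma> \<in> OR \<Longrightarrow> 1 - Pt f (k + 1) \<sigma> \<le> 1 - Pt f k \<sigma>" for k \<sigma>
    using Pt_mult[OF one, of \<sigma> k] by simp
  have monok: "\<sigma> \<in> OR \<Longrightarrow> 1 - Pt f (j + i) \<sigma> \<le> 1 - Pt f j \<sigma>" for i j \<sigma>
  proof (induction i)
    case (Suc i) thus ?case using mono[of \<sigma> "j + i"] by simp
  qed simp
  have blocks: "\<sigma> \<in> OR \<Longrightarrow> 1 - Pt f (n * NN) \<sigma> \<le> (1 - dd) ^ n" for n \<sigma>
  proof (induction n arbitrary: \<sigma>)
    case 0 thus ?case by (cases "has_sink V E \<sigma>") (auto simp: Pt_0)
  next
    case (Suc n)
    have "1 - Pt f (n * NN + NN) \<sigma> \<le> (1 - dd) * (1 - Pt f (n * NN) \<sigma>)"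
      by (rule Pt_mult[OF blk]) (use dd_pos Suc(2) in auto)
    also have "\<dots> \<le> (1 - dd) * (1 - dd) ^ n"
      by (rule mult_left_mono) (use Suc dd_pos in auto)
    finally show ?case by (simp add: add.commute)
  qed
  assume \<sigma>: "\<sigma> \<in> OR"
  have "k = (k div NN) * NN + k mod NN" by simp
  hence "1 - Pt f k \<sigma> \<le> 1 - Pt f ((k div NN) * NN) \<sigma>"
    using monok[OF \<sigma>, of "(k div NN) * NN" "k mod NN"] by simp
  also have "\<dots> \<le> (1 - dd) ^ (k div NN)" by (rule blocks[OF \<sigma>])
  finally show ?thesis .
qed

lemma eps_lim: "(\<lambda>k. (1 - dd) ^ (k div NN)) \<longlonglongrightarrow> 0"
proof -
  have a: "(\<lambda>n. (1 - dd) ^ n) \<longlonglongrightarrow> 0"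
    by (rule LIMSEQ_power_zero) (use dd_pos in auto)
  have b: "filterlim (\<lambda>k. k div NN) at_top sequentially"
    unfolding filterlim_at_top eventually_sequentially
  proof
    fix Z :: nat
    have "Z \<le> k div NN" if "Z * NN \<le> k" for k
    proof -
      have "Z * NN div NN \<le> k div NN" by (rule div_le_mono[OF that])
      moreover have "Z * NN div NN = Z" unfolding NN_def by (rule nonzero_mult_div_cancel_right) simp
      ultimately show ?thesis by simp
    qed
    thus "\<exists>N. \<forall>n\<ge>N. Z \<le> n div NN" by blast
  qed
  show ?thesis by (rule filterlim_compose[OF a b])
qed

end

context sfo begin

definition kstep :: "(('a set \<Rightarrow> 'a) \<Rightarrow> 'a) \<Rightarrow> ('a set \<Rightarrow> 'a) \<Rightarrow> ('a set \<Rightarrow> 'a) pmf" where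
  "kstep f \<sigma> = (if has_sink V E \<sigma> then pop E \<sigma> (f \<sigma>) else return_pmf \<sigma>)"

fun law :: "(('a set \<Rightarrow> 'a) \<Rightarrow> 'a) \<Rightarrow> nat \<Rightarrow> ('a set \<Rightarrow> 'a) pmf" where
  "law f 0 = random_orientation E"
| "law f (Suc s) = bind_pmf (law f s) (kstep f)"

lemma set_kstep: "\<sigma> \<in> OR \<Longrightarrow> set_pmf (kstep f \<sigma>) \<subseteq> OR"
  using set_pop_OR by (auto simp: kstep_def)

lemma finite_kstep: "\<sigma> \<in> OR \<Longrightarrow> finite (set_pmf (kstep f \<sigma>))"
  using finite_set_pop by (auto simp: kstep_def)

lemma set_law: "set_pmf (law f s) \<subseteq> OR"
proof (induction s)
  case 0 thus ?case by (simp add: set_ro)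
next
  case (Suc s) thus ?case using set_kstep by fastforce
qed

lemma finite_law: "finite (set_pmf (law f s))"
  using set_law finOR finite_subset by blast

lemma ex_law_Suc: "ex (law f (Suc s)) g = ex (law f s) (\<lambda>\<sigma>. ex (kstep f \<sigma>) g)"
  by (simp only: law.simps, rule ex_bind) (use finite_law finite_kstep set_law in blast)+

definition rho :: "'a \<Rightarrow> ('a set \<Rightarrow> 'a) \<Rightarrow> ('a set \<Rightarrow> 'a)" where
  "rho v \<sigma> = (\<lambda>e. if e \<in> E then (if v \<in> e then v else \<sigma> e) else undefined)"

definition nbhd :: "'a \<Rightarrow> 'a set" where
  "nbhd v = {x. \<exists>e\<in>E. v \<in> e \<and> x \<in> e}"

lemma rho_OR: "\<sigma> \<in> OR \<Longrightarrow> rho v \<sigma> \<in> OR"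
  by (auto simp: OR_iff rho_def)

lemma rho_sink: "is_sink E (rho v \<sigma>) v"
  by (auto simp: is_sink_def rho_def)

lemma sinks_rho:
  assumes "\<sigma> \<in> OR" "v \<in> V"
  shows "sinks (rho v \<sigma>) = insert v (sinks \<sigma> - nbhd v)"
proof (intro equalityI subsetI)
  fix x assume x: "x \<in> sinks (rho v \<sigma>)"
  show "x \<in> insert v (sinks \<sigma> - nbhd v)"
  proof (cases "x = v")
    case False
    have xV: "x \<in> V" and xs: "is_sink E (rho v \<sigma>) x" using x by (auto simp: sinks_def)
    have "x \<notin> nbhd v"
    proof
      assume "x \<in> nbhd v"
      then obtain e where e: "e \<in> E" "v \<in> e" "x \<in> e" by (auto simp: nbhd_def)
      have "rho v \<sigma> e = x" using xs e unfolding is_sink_def by blast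
      moreover have "rho v \<sigma> e = v" using e by (simp add: rho_def)
      ultimately show False using False by simp
    qed
    moreover have "is_sink E \<sigma> x"
      unfolding is_sink_def
    proof (intro ballI impI)
      fix e assume e: "e \<in> E" "x \<in> e"
      hence "v \<notin> e" using \<open>x \<notin> nbhd v\<close> by (auto simp: nbhd_def)
      have "rho v \<sigma> e = x" using xs e unfolding is_sink_def by blast
      thus "\<sigma> e = x" using \<open>v \<notin> e\<close> e by (simp add: rho_def)
    qed
    ultimately show ?thesis using xV by (auto simp: sinks_def)
  qed simp
next
  fix x assume x: "x \<in> insert v (sinks \<sigma> - nbhd v)"
  show "x \<in> sinks (rho v \<sigma>)"
  proof (cases "x = v")
    case True thus ?thesis using assms(2) rho_sink by (auto simp: sinks_def)
  next
    case False
    hence xs: "x \<in> V" "is_sink E \<sigma> x" "x \<notin> nbhd v" using x by (auto simp: sinks_def)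
    have "is_sink E (rho v \<sigma>) x"
      unfolding is_sink_def
    proof (intro ballI impI)
      fix e assume e: "e \<in> E" "x \<in> e"
      hence "v \<notin> e" using xs(3) by (auto simp: nbhd_def)
      have "\<sigma> e = x" using xs(2) e unfolding is_sink_def by blast
      thus "rho v \<sigma> e = x" using \<open>v \<notin> e\<close> e by (simp add: rho_def)
    qed
    thus ?thesis using xs by (auto simp: sinks_def)
  qed
qed

lemma agree_rho:
  assumes "\<sigma> \<in> OR" "is_sink E \<sigma> v" "agree v \<sigma> \<sigma>'"
  shows "\<sigma> = rho v \<sigma>'"
proof
  fix e show "\<sigma> e = rho v \<sigma>' e"
    using assms by (cases "e \<in> E") (auto simp: OR_iff is_sink_def agree_def rho_def)
qed

lemma agree_rho2: "agree v (rho v \<sigma>') \<sigma>'"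
  by (auto simp: agree_def rho_def)

lemma pmf_law_Suc:
  assumes f: "valid f" and \<sigma>': "\<sigma>' \<in> OR"
  shows "pmf (law f (Suc s)) \<sigma>' = (if has_sink V E \<sigma>' then 0 else pmf (law f s) \<sigma>') +
     (\<Sum>v\<in>V. if f (rho v \<sigma>') = v then (1/2) ^ degree E v * pmf (law f s) (rho v \<sigma>') else 0)"
proof -
  let ?L = "law f s"
  define g where "g = (\<lambda>\<sigma>. if has_sink V E \<sigma> \<and> agree (f \<sigma>) \<sigma> \<sigma>' then pmf ?L \<sigma> * (1/2) ^ degree E (f \<sigma>) else 0)"
  have "pmf (law f (Suc s)) \<sigma>' = ex ?L (\<lambda>\<sigma>. pmf (kstep f \<sigma>) \<sigma>')"
    unfolding ex_def law.simps by (rule pmf_bind)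
  also have "\<dots> = (\<Sum>\<sigma>\<in>OR. pmf ?L \<sigma> * pmf (kstep f \<sigma>) \<sigma>')"
    by (rule ex_finite_sum[OF finOR set_law])
  also have "\<dots> = (\<Sum>\<sigma>\<in>OR. (if \<not> has_sink V E \<sigma> \<and> \<sigma> = \<sigma>' then pmf ?L \<sigma> else 0) + g \<sigma>)"
  proof (rule sum.cong[OF refl])
    fix \<sigma> assume \<sigma>: "\<sigma> \<in> OR"
    show "pmf ?L \<sigma> * pmf (kstep f \<sigma>) \<sigma>' = (if \<not> has_sink V E \<sigma> \<and> \<sigma> = \<sigma>' then pmf ?L \<sigma> else 0) + g \<sigma>"
      using \<sigma>' by (cases "has_sink V E \<sigma>") (auto simp: kstep_def g_def pmf_pop[OF \<sigma>] indicator_def)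
  qed
  also have "\<dots> = (\<Sum>\<sigma>\<in>OR. (if \<not> has_sink V E \<sigma> \<and> \<sigma> = \<sigma>' then pmf ?L \<sigma> else 0)) + (\<Sum>\<sigma>\<in>OR. g \<sigma>)"
    by (rule sum.distrib)
  also have "(\<Sum>\<sigma>\<in>OR. (if \<not> has_sink V E \<sigma> \<and> \<sigma> = \<sigma>' then pmf ?L \<sigma> else 0)) =
             (if has_sink V E \<sigma>' then 0 else pmf ?L \<sigma>')"
  proof -
    have "(\<Sum>\<sigma>\<in>OR. (if \<not> has_sink V E \<sigma> \<and> \<sigma> = \<sigma>' then pmf ?L \<sigma> else 0)) =
          (\<Sum>\<sigma>\<in>OR. (if \<sigma> = \<sigma>' then (if has_sink V E \<sigma>' then 0 else pmf ?L \<sigma>') else 0))"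
      by (rule sum.cong) auto
    also have "\<dots> = (if has_sink V E \<sigma>' then 0 else pmf ?L \<sigma>')"
      using \<sigma>' finOR by (simp add: sum.delta)
    finally show ?thesis .
  qed
  also have "(\<Sum>\<sigma>\<in>OR. g \<sigma>) = (\<Sum>\<sigma>\<in>OR. \<Sum>v\<in>V. if f \<sigma> = v then g \<sigma> else 0)"
  proof (rule sum.cong[OF refl])
    fix \<sigma> assume \<sigma>: "\<sigma> \<in> OR"
    show "g \<sigma> = (\<Sum>v\<in>V. if f \<sigma> = v then g \<sigma> else 0)"
    proof (cases "has_sink V E \<sigma>")
      case True
      hence "f \<sigma> \<in> V" using f by (auto simp: valid_def)
      thus ?thesis using finV by (simp add: sum.delta')
    next
      case False hence g0: "g \<sigma> = 0" by (simp add: g_def)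
      have "(\<Sum>v\<in>V. if f \<sigma> = v then g \<sigma> else 0) = 0" by (rule sum.neutral) (simp add: g0)
      with g0 show ?thesis by simp
    qed
  qed
  also have "\<dots> = (\<Sum>v\<in>V. \<Sum>\<sigma>\<in>OR. if f \<sigma> = v then g \<sigma> else 0)"
    by (rule sum.swap)
  also have "\<dots> = (\<Sum>v\<in>V. if f (rho v \<sigma>') = v then (1/2) ^ degree E v * pmf ?L (rho v \<sigma>') else 0)"
  proof (rule sum.cong[OF refl])
    fix v assume v: "v \<in> V"
    have "(\<Sum>\<sigma>\<in>OR. if f \<sigma> = v then g \<sigma> else 0) =
          (\<Sum>\<sigma>\<in>OR. if \<sigma> = rho v \<sigma>' then (if f (rho v \<sigma>') = v then (1/2) ^ degree E v * pmf ?L (rho v \<sigma>') else 0) else 0)"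
    proof (rule sum.cong[OF refl])
      fix \<sigma> assume \<sigma>: "\<sigma> \<in> OR"
      show "(if f \<sigma> = v then g \<sigma> else 0) = (if \<sigma> = rho v \<sigma>' then (if f (rho v \<sigma>') = v then (1/2) ^ degree E v * pmf ?L (rho v \<sigma>') else 0) else 0)"
      proof (cases "\<sigma> = rho v \<sigma>'")
        case True
        have hs: "has_sink V E \<sigma>" using True v rho_sink by (auto simp: has_sink_def)
        show ?thesis using True hs agree_rho2[of v \<sigma>'] by (auto simp: g_def mult.commute)
      next
        case False
        have "\<not> (f \<sigma> = v \<and> has_sink V E \<sigma> \<and> agree (f \<sigma>) \<sigma> \<sigma>')"
        proof
          assume a: "f \<sigma> = v \<and> has_sink V E \<sigma> \<and> agree (f \<sigma>) \<sigma> \<sigma>'"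
          hence "is_sink E \<sigma> v" using f by (auto simp: valid_def)
          hence "\<sigma> = rho v \<sigma>'" using agree_rho[OF \<sigma>] a by blast
          thus False using False by simp
        qed
        thus ?thesis using False by (auto simp: g_def)
      qed
    qed
    also have "\<dots> = (if f (rho v \<sigma>') = v then (1/2) ^ degree E v * pmf ?L (rho v \<sigma>') else 0)"
      using rho_OR[OF \<sigma>'] finOR by (simp add: sum.delta')
    finally show "(\<Sum>\<sigma>\<in>OR. if f \<sigma> = v then g \<sigma> else 0) = (if f (rho v \<sigma>') = v then (1/2) ^ degree E v * pmf ?L (rho v \<sigma>') else 0)" .
  qed
  finally show ?thesis .
qed

end

context sfo begin

definition fu :: "'a \<Rightarrow> ('a set \<Rightarrow> 'a) \<Rightarrow> 'a" where
  "fu u \<sigma> = (if sinks \<sigma> - {u} \<noteq> {} then (SOME x. x \<in> sinks \<sigma> - {u}) else u)"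

lemma valid_fu: "valid (fu u)"
  unfolding valid_def
proof (intro allI impI)
  fix \<sigma> assume "has_sink V E \<sigma>"
  hence ne: "sinks \<sigma> \<noteq> {}" by (simp add: has_sink_iff)
  show "fu u \<sigma> \<in> V \<and> is_sink E \<sigma> (fu u \<sigma>)"
  proof (cases "sinks \<sigma> - {u} \<noteq> {}")
    case True
    hence "(SOME x. x \<in> sinks \<sigma> - {u}) \<in> sinks \<sigma> - {u}" by (meson ex_in_conv someI_ex)
    thus ?thesis using True by (simp add: fu_def sinks_def)
  next
    case False
    hence "sinks \<sigma> = {u}" using ne by blast
    thus ?thesis using False by (auto simp: fu_def sinks_def)
  qed
qed

lemma fu_sinks: "sinks \<sigma>1 = sinks \<sigma>2 \<Longrightarrow> fu u \<sigma>1 = fu u \<sigma>2"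
  by (simp add: fu_def)

lemma fu_sinks2: "sinks \<sigma>1 - {u} = sinks \<sigma>2 - {u} \<Longrightarrow> sinks \<sigma>1 - {u} \<noteq> {} \<Longrightarrow> fu u \<sigma>1 = fu u \<sigma>2"
  by (simp add: fu_def)

lemma fu_single: "sinks \<sigma> - {u} = {v} \<Longrightarrow> fu u \<sigma> = v"
  by (simp add: fu_def)

lemma fu_u: "sinks \<sigma> - {u} = {} \<Longrightarrow> fu u \<sigma> = u"
  by (simp add: fu_def)

lemma law_inv:
  "(\<forall>\<sigma>1\<in>OR. \<forall>\<sigma>2\<in>OR. sinks \<sigma>1 = sinks \<sigma>2 \<longrightarrow> pmf (law (fu u) s) \<sigma>1 = pmf (law (fu u) s) \<sigma>2) \<and>
   (\<forall>\<sigma>1\<in>OR. \<forall>\<sigma>2\<in>OR. sinks \<sigma>1 - {u} = sinks \<sigma>2 - {u} \<and> sinks \<sigma>1 - {u} \<noteq> {} \<longrightarrow>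
       pmf (law (fu u) s) \<sigma>1 = pmf (law (fu u) s) \<sigma>2)"
proof (induction s)
  case 0 thus ?case by (simp add: pmf_ro)
next
  case (Suc s)
  let ?L = "law (fu u) s"
  have I1: "\<And>\<sigma>1 \<sigma>2. \<sigma>1 \<in> OR \<Longrightarrow> \<sigma>2 \<in> OR \<Longrightarrow> sinks \<sigma>1 = sinks \<sigma>2 \<Longrightarrow> pmf ?L \<sigma>1 = pmf ?L \<sigma>2"
    using Suc.IH by blast
  have I2: "\<And>\<sigma>1 \<sigma>2. \<sigma>1 \<in> OR \<Longrightarrow> \<sigma>2 \<in> OR \<Longrightarrow> sinks \<sigma>1 - {u} = sinks \<sigma>2 - {u} \<Longrightarrow> sinks \<sigma>1 - {u} \<noteq> {} \<Longrightarrow> pmf ?L \<sigma>1 = pmf ?L \<sigma>2"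
    using Suc.IH by blast
  note form = pmf_law_Suc[OF valid_fu]
  show ?case
  proof (intro conjI ballI impI)
    fix \<sigma>1 \<sigma>2 assume s: "\<sigma>1 \<in> OR" "\<sigma>2 \<in> OR" "sinks \<sigma>1 = sinks \<sigma>2"
    have hs: "has_sink V E \<sigma>1 = has_sink V E \<sigma>2" using s(3) by (simp add: has_sink_iff)
    have t: "(if fu u (rho v \<sigma>1) = v then (1/2) ^ degree E v * pmf ?L (rho v \<sigma>1) else 0) =
             (if fu u (rho v \<sigma>2) = v then (1/2) ^ degree E v * pmf ?L (rho v \<sigma>2) else 0)"
      if v: "v \<in> V" for v
    proof -
      have eq: "sinks (rho v \<sigma>1) = sinks (rho v \<sigma>2)" using sinks_rho[OF s(1) v] sinks_rho[OF s(2) v] s(3) by simp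
      show ?thesis using fu_sinks[OF eq, of u] I1[OF rho_OR[OF s(1)] rho_OR[OF s(2)] eq] by simp
    qed
    show "pmf (law (fu u) (Suc s)) \<sigma>1 = pmf (law (fu u) (Suc s)) \<sigma>2"
      unfolding form[OF s(1)] form[OF s(2)] using hs I1[OF s] t by (simp cong: sum.cong)
  next
    fix \<sigma>1 \<sigma>2 assume s0: "\<sigma>1 \<in> OR" "\<sigma>2 \<in> OR" and s1: "sinks \<sigma>1 - {u} = sinks \<sigma>2 - {u} \<and> sinks \<sigma>1 - {u} \<noteq> {}"
    have hs1: "has_sink V E \<sigma>1" and hs2: "has_sink V E \<sigma>2" using s1 by (auto simp: has_sink_iff)
    have t: "(if fu u (rho v \<sigma>1) = v then (1/2) ^ degree E v * pmf ?L (rho v \<sigma>1) else 0) =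
             (if fu u (rho v \<sigma>2) = v then (1/2) ^ degree E v * pmf ?L (rho v \<sigma>2) else 0)"
      if v: "v \<in> V" for v
    proof (cases "v = u")
      case True
      have eq: "sinks (rho v \<sigma>1) = sinks (rho v \<sigma>2)"
        unfolding sinks_rho[OF s0(1) v] sinks_rho[OF s0(2) v] using s1 True by blast
      show ?thesis using fu_sinks[OF eq, of u] I1[OF rho_OR[OF s0(1)] rho_OR[OF s0(2)] eq] by simp
    next
      case False
      have eq: "sinks (rho v \<sigma>1) - {u} = sinks (rho v \<sigma>2) - {u}"
        unfolding sinks_rho[OF s0(1) v] sinks_rho[OF s0(2) v] using s1 False by blast
      have ne: "sinks (rho v \<sigma>1) - {u} \<noteq> {}"
        unfolding sinks_rho[OF s0(1) v] using False by blast
      show ?thesis using fu_sinks2[OF eq ne] I2[OF rho_OR[OF s0(1)] rho_OR[OF s0(2)] eq ne] by simp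
    qed
    show "pmf (law (fu u) (Suc s)) \<sigma>1 = pmf (law (fu u) (Suc s)) \<sigma>2"
      unfolding form[OF s0(1)] form[OF s0(2)] using hs1 hs2 t by (simp cong: sum.cong)
  qed
qed

lemma law_I1: "\<sigma>1 \<in> OR \<Longrightarrow> \<sigma>2 \<in> OR \<Longrightarrow> sinks \<sigma>1 = sinks \<sigma>2 \<Longrightarrow> pmf (law (fu u) s) \<sigma>1 = pmf (law (fu u) s) \<sigma>2"
  using law_inv by blast

lemma law_I2: "\<sigma>1 \<in> OR \<Longrightarrow> \<sigma>2 \<in> OR \<Longrightarrow> sinks \<sigma>1 - {u} = sinks \<sigma>2 - {u} \<Longrightarrow> sinks \<sigma>1 - {u} \<noteq> {} \<Longrightarrow>
    pmf (law (fu u) s) \<sigma>1 = pmf (law (fu u) s) \<sigma>2"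
  using law_inv by blast

lemma law_I3:
  assumes s0: "\<sigma>0 \<in> OR" "sinks \<sigma>0 = {}" and s1: "\<sigma>1 \<in> OR" "sinks \<sigma>1 = {u}"
  shows "pmf (law (fu u) (Suc s)) \<sigma>1 = pmf (law (fu u) (Suc s)) \<sigma>0 - pmf (law (fu u) s) \<sigma>0"
proof -
  let ?L = "law (fu u) s"
  note form = pmf_law_Suc[OF valid_fu]
  have hs0: "\<not> has_sink V E \<sigma>0" and hs1: "has_sink V E \<sigma>1" using s0 s1 by (auto simp: has_sink_iff)
  have t: "(if fu u (rho v \<sigma>1) = v then (1/2) ^ degree E v * pmf ?L (rho v \<sigma>1) else 0) =
           (if fu u (rho v \<sigma>0) = v then (1/2) ^ degree E v * pmf ?L (rho v \<sigma>0) else 0)"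
    if v: "v \<in> V" for v
  proof -
    have r0: "sinks (rho v \<sigma>0) = {v}" unfolding sinks_rho[OF s0(1) v] s0(2) by simp
    have r1: "sinks (rho v \<sigma>1) = insert v ({u} - nbhd v)" unfolding sinks_rho[OF s1(1) v] s1(2) by simp
    show ?thesis
    proof (cases "v = u")
      case True
      have r1': "sinks (rho v \<sigma>1) = {v}" using r1 True by blast
      have f0: "fu u (rho v \<sigma>0) = v" using fu_u[of "rho v \<sigma>0" u] r0 True by simp
      have f1: "fu u (rho v \<sigma>1) = v" using fu_u[of "rho v \<sigma>1" u] r1' True by simp
      have "pmf ?L (rho v \<sigma>1) = pmf ?L (rho v \<sigma>0)"
        by (rule law_I1[OF rho_OR[OF s1(1)] rho_OR[OF s0(1)]]) (simp add: r0 r1')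
      thus ?thesis using f0 f1 by simp
    next
      case False
      have e1: "sinks (rho v \<sigma>1) - {u} = {v}" using r1 False by blast
      have e0: "sinks (rho v \<sigma>0) - {u} = {v}" using r0 False by blast
      have f0: "fu u (rho v \<sigma>0) = v" by (rule fu_single[OF e0])
      have f1: "fu u (rho v \<sigma>1) = v" by (rule fu_single[OF e1])
      have "pmf ?L (rho v \<sigma>1) = pmf ?L (rho v \<sigma>0)"
        by (rule law_I2[OF rho_OR[OF s1(1)] rho_OR[OF s0(1)]]) (simp_all add: e0 e1)
      thus ?thesis using f0 f1 by simp
    qed
  qed
  have "pmf (law (fu u) (Suc s)) \<sigma>1 = (\<Sum>v\<in>V. if fu u (rho v \<sigma>0) = v then (1/2) ^ degree E v * pmf ?L (rho v \<sigma>0) else 0)"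
    unfolding form[OF s1(1)] using hs1 t by (simp cong: sum.cong)
  also have "\<dots> = pmf (law (fu u) (Suc s)) \<sigma>0 - pmf ?L \<sigma>0"
    unfolding form[OF s0(1)] using hs0 by simp
  finally show ?thesis .
qed

lemma law_tele:
  assumes s0: "\<sigma>0 \<in> OR" "sinks \<sigma>0 = {}" and s1: "\<sigma>1 \<in> OR" "sinks \<sigma>1 = {u}"
  shows "(\<Sum>t<Suc n. pmf (law (fu u) t) \<sigma>1) = pmf (law (fu u) n) \<sigma>0"
proof (induction n)
  case 0
  show ?case using s0(1) s1(1) by (simp add: pmf_ro)
next
  case (Suc n)
  show ?case using Suc law_I3[OF s0 s1, of n] by simp
qed

lemma SF_iff: "\<sigma> \<in> sink_free_orientations V E \<longleftrightarrow> \<sigma> \<in> OR \<and> sinks \<sigma> = {}"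
  by (simp add: sink_free_orientations_def has_sink_iff)

lemma finite_SF: "finite (sink_free_orientations V E)"
  using finOR by (simp add: sink_free_orientations_def)

lemma law_SF_bound:
  assumes SF: "sink_free_orientations V E \<noteq> {}" and \<sigma>0: "\<sigma>0 \<in> sink_free_orientations V E"
  shows "real (card (sink_free_orientations V E)) * pmf (law (fu u) n) \<sigma>0 \<le> 1"
proof -
  let ?S = "sink_free_orientations V E"
  have "(\<Sum>\<tau>\<in>?S. pmf (law (fu u) n) \<tau>) = (\<Sum>\<tau>\<in>?S. pmf (law (fu u) n) \<sigma>0)"
    by (rule sum.cong[OF refl], rule law_I1) (use \<sigma>0 in \<open>auto simp: SF_iff\<close>)
  also have "\<dots> = real (card ?S) * pmf (law (fu u) n) \<sigma>0" by simp
  finally have "real (card ?S) * pmf (law (fu u) n) \<sigma>0 = measure_pmf.prob (law (fu u) n) ?S"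
    using measure_measure_pmf_finite[OF finite_SF] by simp
  thus ?thesis by simp
qed

definition Zu :: "'a \<Rightarrow> nat" where
  "Zu u = card {\<sigma>\<in>OR. sinks \<sigma> = {u}}"

lemma class_sum_bound:
  assumes SF: "sink_free_orientations V E \<noteq> {}"
  shows "(\<Sum>t<n. \<Sum>\<sigma>\<in>{\<sigma>\<in>OR. sinks \<sigma> = {u}}. pmf (law (fu u) t) \<sigma>) \<le> real (Zu u) / real (card (sink_free_orientations V E))"
proof (cases n)
  case 0 thus ?thesis by simp
next
  case (Suc m)
  obtain \<sigma>0 where \<sigma>0: "\<sigma>0 \<in> sink_free_orientations V E" using SF by blast
  have \<sigma>0': "\<sigma>0 \<in> OR" "sinks \<sigma>0 = {}" using \<sigma>0 by (auto simp: SF_iff)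
  have cpos: "0 < card (sink_free_orientations V E)" using SF finite_SF by (simp add: card_gt_0_iff)
  have "(\<Sum>t<n. \<Sum>\<sigma>\<in>{\<sigma>\<in>OR. sinks \<sigma> = {u}}. pmf (law (fu u) t) \<sigma>) =
        (\<Sum>\<sigma>\<in>{\<sigma>\<in>OR. sinks \<sigma> = {u}}. \<Sum>t<Suc m. pmf (law (fu u) t) \<sigma>)"
    unfolding Suc by (rule sum.swap)
  also have "\<dots> = (\<Sum>\<sigma>\<in>{\<sigma>\<in>OR. sinks \<sigma> = {u}}. pmf (law (fu u) m) \<sigma>0)"
    by (rule sum.cong[OF refl], rule law_tele[OF \<sigma>0']) auto
  also have "\<dots> = real (Zu u) * pmf (law (fu u) m) \<sigma>0" by (simp add: Zu_def)
  also have "\<dots> \<le> real (Zu u) / real (card (sink_free_orientations V E))"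
  proof -
    have "real (card (sink_free_orientations V E)) * pmf (law (fu u) m) \<sigma>0 \<le> 1"
      by (rule law_SF_bound[OF SF \<sigma>0])
    hence "real (Zu u) * (real (card (sink_free_orientations V E)) * pmf (law (fu u) m) \<sigma>0) \<le> real (Zu u) * 1"
      by (rule mult_left_mono) simp
    hence "real (card (sink_free_orientations V E)) * (real (Zu u) * pmf (law (fu u) m) \<sigma>0) \<le> real (Zu u)"
      by (simp add: algebra_simps)
    thus ?thesis using cpos by (simp add: field_simps)
  qed
  finally show ?thesis .
qed

end

context sfo begin

lemma val_law:
  assumes f: "valid f" and \<phi>: "\<And>\<sigma> a. has_sink V E \<sigma> \<Longrightarrow> \<phi> \<sigma> a = 0"
  shows "ex (law f s) (\<lambda>\<sigma>. val f (\<lambda>_. 0) \<phi> n \<sigma> 0) = ex (law f (s + n)) (\<lambda>\<sigma>. \<phi> \<sigma> 0)"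
proof (induction n arbitrary: s)
  case 0 thus ?case by simp
next
  case (Suc n)
  have "ex (law f s) (\<lambda>\<sigma>. val f (\<lambda>_. 0) \<phi> (Suc n) \<sigma> 0) =
        ex (law f s) (\<lambda>\<sigma>. ex (kstep f \<sigma>) (\<lambda>\<sigma>'. val f (\<lambda>_. 0) \<phi> n \<sigma>' 0))"
    by (rule ex_cong) (auto simp: kstep_def val_SF)
  also have "\<dots> = ex (law f (Suc s)) (\<lambda>\<sigma>. val f (\<lambda>_. 0) \<phi> n \<sigma> 0)"
    by (rule ex_law_Suc[symmetric])
  also have "\<dots> = ex (law f (s + Suc n)) (\<lambda>\<sigma>. \<phi> \<sigma> 0)" using Suc.IH[of "Suc s"] by simp
  finally show ?case .
qed

definition phic :: "('a set \<Rightarrow> 'a) \<Rightarrow> real \<Rightarrow> real" where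
  "phic \<sigma> a = (if has_sink V E \<sigma> then 0 else a)"

fun Cn :: "(('a set \<Rightarrow> 'a) \<Rightarrow> 'a) \<Rightarrow> ('a \<Rightarrow> real) \<Rightarrow> nat \<Rightarrow> ('a set \<Rightarrow> 'a) \<Rightarrow> real" where
  "Cn f c 0 \<sigma> = 0"
| "Cn f c (Suc n) \<sigma> = (if has_sink V E \<sigma> then ex (pop E \<sigma> (f \<sigma>)) (\<lambda>\<sigma>'. c (f \<sigma>) + Cn f c n \<sigma>') else 0)"

lemma Cn_SF: "\<not> has_sink V E \<sigma> \<Longrightarrow> Cn f c n \<sigma> = 0"
  by (cases n) auto

lemma val_cost_upper:
  assumes c: "\<And>x. 0 \<le> c x"
  shows "\<sigma> \<in> OR \<Longrightarrow> 0 \<le> a \<Longrightarrow> val f c phic n \<sigma> a \<le> a + Cn f c n \<sigma>"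
proof (induction n arbitrary: \<sigma> a)
  case 0 thus ?case by (simp add: phic_def)
next
  case (Suc n)
  show ?case
  proof (cases "has_sink V E \<sigma>")
    case False thus ?thesis by (simp add: phic_def)
  next
    case True
    let ?M = "pop E \<sigma> (f \<sigma>)"
    have fin: "finite (set_pmf ?M)" using finite_set_pop Suc(2) by blast
    have "val f c phic (Suc n) \<sigma> a = ex ?M (\<lambda>\<sigma>'. val f c phic n \<sigma>' (a + c (f \<sigma>)))" using True by simp
    also have "\<dots> \<le> ex ?M (\<lambda>\<sigma>'. (a + c (f \<sigma>)) + Cn f c n \<sigma>')"
      by (rule ex_mono[OF fin], rule Suc.IH) (use set_pop_OR Suc(2,3) c in \<open>auto intro: add_nonneg_nonneg\<close>)
    also have "\<dots> = a + ex ?M (\<lambda>\<sigma>'. c (f \<sigma>) + Cn f c n \<sigma>')"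
      by (simp add: ex_add[OF fin] ex_const add.assoc)
    also have "\<dots> = a + Cn f c (Suc n) \<sigma>" using True by simp
    finally show ?thesis .
  qed
qed

definition gc :: "(('a set \<Rightarrow> 'a) \<Rightarrow> 'a) \<Rightarrow> ('a \<Rightarrow> real) \<Rightarrow> ('a set \<Rightarrow> 'a) \<Rightarrow> real" where
  "gc f c \<sigma> = (if has_sink V E \<sigma> then c (f \<sigma>) else 0)"

lemma Cn_law: "ex (law f s) (Cn f c n) = (\<Sum>t<n. ex (law f (s + t)) (gc f c))"
proof (induction n arbitrary: s)
  case 0 thus ?case by (simp add: ex_const)
next
  case (Suc n)
  have fin: "finite (set_pmf (law f s))" by (rule finite_law)
  have "ex (law f s) (Cn f c (Suc n)) = ex (law f s) (\<lambda>\<sigma>. gc f c \<sigma> + ex (kstep f \<sigma>) (Cn f c n))"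
  proof (rule ex_cong)
    fix \<sigma> assume "\<sigma> \<in> set_pmf (law f s)"
    hence \<sigma>: "\<sigma> \<in> OR" using set_law by blast
    show "Cn f c (Suc n) \<sigma> = gc f c \<sigma> + ex (kstep f \<sigma>) (Cn f c n)"
    proof (cases "has_sink V E \<sigma>")
      case True
      have fin2: "finite (set_pmf (pop E \<sigma> (f \<sigma>)))" using finite_set_pop \<sigma> by blast
      show ?thesis using True by (simp add: gc_def kstep_def ex_add[OF fin2] ex_const)
    next
      case False thus ?thesis by (simp add: gc_def kstep_def Cn_SF)
    qed
  qed
  also have "\<dots> = ex (law f s) (gc f c) + ex (law f s) (\<lambda>\<sigma>. ex (kstep f \<sigma>) (Cn f c n))"
    by (rule ex_add[OF fin])
  also have "ex (law f s) (\<lambda>\<sigma>. ex (kstep f \<sigma>) (Cn f c n)) = ex (law f (Suc s)) (Cn f c n)"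
    by (rule ex_law_Suc[symmetric])
  also have "\<dots> = (\<Sum>t<n. ex (law f (Suc s + t)) (gc f c))" by (rule Suc.IH)
  finally show ?case unfolding sum.lessThan_Suc_shift by (simp del: law.simps Cn.simps)
qed

definition ind :: "'a \<Rightarrow> 'a \<Rightarrow> real" where
  "ind u x = (if x = u then 1 else 0)"

lemma gc_fu: "gc (fu u) (ind u) \<sigma> = (if sinks \<sigma> = {u} then 1 else 0)"
proof (cases "sinks \<sigma> - {u} = {}")
  case True
  thus ?thesis by (auto simp: gc_def fu_def ind_def has_sink_iff)
next
  case False
  hence "(SOME x. x \<in> sinks \<sigma> - {u}) \<in> sinks \<sigma> - {u}" by (meson ex_in_conv someI_ex)
  hence "fu u \<sigma> \<noteq> u" using False by (auto simp: fu_def)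
  moreover have "sinks \<sigma> \<noteq> {u}" using False by auto
  ultimately show ?thesis using False by (auto simp: gc_def ind_def has_sink_iff)
qed

lemma ex_law_gc: "ex (law (fu u) t) (gc (fu u) (ind u)) = (\<Sum>\<sigma>\<in>{\<sigma>\<in>OR. sinks \<sigma> = {u}}. pmf (law (fu u) t) \<sigma>)"
proof -
  have "ex (law (fu u) t) (gc (fu u) (ind u)) = (\<Sum>\<sigma>\<in>OR. pmf (law (fu u) t) \<sigma> * gc (fu u) (ind u) \<sigma>)"
    by (rule ex_finite_sum[OF finOR set_law])
  also have "\<dots> = (\<Sum>\<sigma>\<in>OR. if sinks \<sigma> = {u} then pmf (law (fu u) t) \<sigma> else 0)"
    by (rule sum.cong) (auto simp: gc_fu)
  also have "\<dots> = (\<Sum>\<sigma>\<in>{\<sigma>\<in>OR. sinks \<sigma> = {u}}. pmf (law (fu u) t) \<sigma>)"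
    by (rule sum.inter_filter[symmetric, OF finOR])
  finally show ?thesis .
qed

lemma val_cost_lower:
  assumes c: "\<And>x. 0 \<le> c x"
  shows "\<sigma> \<in> OR \<Longrightarrow> 0 \<le> a \<Longrightarrow> a * Pt f k \<sigma> \<le> val f c phic k \<sigma> a"
proof (induction k arbitrary: \<sigma> a)
  case 0 thus ?case by (simp add: phic_def Pt_0)
next
  case (Suc k)
  show ?case
  proof (cases "has_sink V E \<sigma>")
    case False thus ?thesis by (simp add: phic_def Pt_SF)
  next
    case True
    let ?M = "pop E \<sigma> (f \<sigma>)"
    have fin: "finite (set_pmf ?M)" using finite_set_pop Suc(2) by blast
    have "a * Pt f (Suc k) \<sigma> = ex ?M (\<lambda>\<sigma>'. a * Pt f k \<sigma>')"
      using True by (simp add: Pt_Suc ex_cmult)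
    also have "\<dots> \<le> ex ?M (\<lambda>\<sigma>'. (a + c (f \<sigma>)) * Pt f k \<sigma>')"
    proof (rule ex_mono[OF fin])
      fix \<sigma>' assume "\<sigma>' \<in> set_pmf ?M"
      hence "0 \<le> Pt f k \<sigma>'" using Pt_bounds set_pop_OR Suc(2) by blast
      thus "a * Pt f k \<sigma>' \<le> (a + c (f \<sigma>)) * Pt f k \<sigma>'" using c by (simp add: mult_right_mono)
    qed
    also have "\<dots> \<le> ex ?M (\<lambda>\<sigma>'. val f c phic k \<sigma>' (a + c (f \<sigma>)))"
      by (rule ex_mono[OF fin], rule Suc.IH) (use set_pop_OR Suc(2,3) c in \<open>auto intro: add_nonneg_nonneg\<close>)
    also have "\<dots> = val f c phic (Suc k) \<sigma> a" using True by simp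
    finally show ?thesis .
  qed
qed

lemma costh_nonneg: "(\<And>x. 0 \<le> c x) \<Longrightarrow> 0 \<le> costh sel c h"
  unfolding costh_def by (rule sum_nonneg) auto

lemma cost_u:
  assumes SF: "sink_free_orientations V E \<noteq> {}"
    and sel: "\<forall>h. has_sink V E (hd h) \<longrightarrow> sel h \<in> V \<and> is_sink E (hd h) (sel h)"
  shows "ex (sp_hist V E sel j) (costh sel (ind u)) \<le> real (Zu u) / real (card (sink_free_orientations V E))"
proof -
  let ?f = "fu u" and ?c = "ind u"
  let ?X = "ex (sp_hist V E sel j) (costh sel ?c)"
  let ?B = "real (Zu u) / real (card (sink_free_orientations V E))"
  let ?eps = "\<lambda>k. (1 - dd) ^ (k div NN)"
  have c0: "\<And>x. 0 \<le> ?c x" by (simp add: ind_def)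
  have phic0: "\<And>\<sigma> a. has_sink V E \<sigma> \<Longrightarrow> phic \<sigma> a = 0" by (simp add: phic_def)
  have finh: "finite (set_pmf (sp_hist V E sel j))" by (rule finite_sp_hist)
  have bound: "(1 - ?eps k) * ?X \<le> ?B" for k
  proof -
    have "(1 - ?eps k) * ?X = ex (sp_hist V E sel j) (\<lambda>h. costh sel ?c h * (1 - ?eps k))"
      using ex_cmult[of "sp_hist V E sel j" "1 - ?eps k" "costh sel ?c"] by (simp add: mult.commute)
    also have "\<dots> \<le> ex (sp_hist V E sel j) (\<lambda>h. costh sel ?c h * Pt ?f k (hd h))"
    proof (rule ex_mono[OF finh])
      fix h assume "h \<in> set_pmf (sp_hist V E sel j)"
      hence hO: "hd h \<in> OR" using sp_hist_inv by (auto simp: hinv_def)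
      have "1 - Pt ?f k (hd h) \<le> ?eps k" by (rule Pt_decay[OF valid_fu SF hO])
      thus "costh sel ?c h * (1 - ?eps k) \<le> costh sel ?c h * Pt ?f k (hd h)"
        using costh_nonneg[OF c0] by (intro mult_left_mono) auto
    qed
    also have "\<dots> \<le> ex (sp_hist V E sel j) (\<lambda>h. val ?f ?c phic k (hd h) (costh sel ?c h))"
    proof (rule ex_mono[OF finh])
      fix h assume "h \<in> set_pmf (sp_hist V E sel j)"
      hence hO: "hd h \<in> OR" using sp_hist_inv by (auto simp: hinv_def)
      show "costh sel ?c h * Pt ?f k (hd h) \<le> val ?f ?c phic k (hd h) (costh sel ?c h)"
        by (rule val_cost_lower[OF c0 hO costh_nonneg[OF c0]])
    qed
    also have "\<dots> = ex (random_orientation E) (\<lambda>\<sigma>. val ?f ?c phic (j + k) \<sigma> 0)"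
      by (rule bridge[OF valid_fu phic0 sel])
    also have "\<dots> \<le> ex (random_orientation E) (Cn ?f ?c (j + k))"
    proof (rule ex_mono)
      show "finite (set_pmf (random_orientation E))" using finOR by (simp add: set_ro)
    next
      fix \<sigma> assume "\<sigma> \<in> set_pmf (random_orientation E)"
      hence "\<sigma> \<in> OR" by (simp add: set_ro)
      thus "val ?f ?c phic (j + k) \<sigma> 0 \<le> Cn ?f ?c (j + k) \<sigma>"
        using val_cost_upper[OF c0, of \<sigma> 0] by simp
    qed
    also have "\<dots> = (\<Sum>t<j + k. ex (law ?f t) (gc ?f ?c))"
      using Cn_law[of ?f 0 ?c "j + k"] by simp
    also have "\<dots> = (\<Sum>t<j + k. \<Sum>\<sigma>\<in>{\<sigma>\<in>OR. sinks \<sigma> = {u}}. pmf (law ?f t) \<sigma>)"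
      by (simp add: ex_law_gc)
    also have "\<dots> \<le> ?B" by (rule class_sum_bound[OF SF])
    finally show ?thesis .
  qed
  have lim: "(\<lambda>k. (1 - ?eps k) * ?X) \<longlonglongrightarrow> (1 - 0) * ?X"
    by (intro tendsto_intros eps_lim)
  show ?thesis using LIMSEQ_le_const2[OF lim] bound by simp
qed

end

context sfo begin

definition outE :: "('a set \<Rightarrow> 'a) \<Rightarrow> 'a \<Rightarrow> 'a set set" where
  "outE \<sigma> x = {e\<in>E. x \<in> e \<and> \<sigma> e \<noteq> x}"

definition outdeg :: "('a set \<Rightarrow> 'a) \<Rightarrow> 'a \<Rightarrow> nat" where
  "outdeg \<sigma> x = card (outE \<sigma> x)"

definition oe :: "('a set \<Rightarrow> 'a) \<Rightarrow> 'a \<Rightarrow> 'a set" where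
  "oe \<sigma> x = (SOME e. e \<in> outE \<sigma> x)"

definition succ :: "('a set \<Rightarrow> 'a) \<Rightarrow> 'a \<Rightarrow> 'a" where
  "succ \<sigma> x = \<sigma> (oe \<sigma> x)"

fun unflip :: "('a set \<Rightarrow> 'a) \<Rightarrow> 'a \<Rightarrow> nat \<Rightarrow> ('a set \<Rightarrow> 'a)" where
  "unflip \<tau> y 0 = \<tau>"
| "unflip \<tau> y (Suc k) = (unflip \<tau> (\<tau> (oe \<tau> y)) k)(oe \<tau> y := y)"

lemma finite_outE: "finite (outE \<sigma> x)"
  unfolding outE_def using finE by simp

lemma is_sink_outE: "is_sink E \<sigma> x \<longleftrightarrow> outE \<sigma> x = {}"
  by (auto simp: is_sink_def outE_def)

lemma outE_single: "outE \<sigma> x = {e} \<Longrightarrow> oe \<sigma> x = e"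
  by (simp add: oe_def)

lemma outdeg1: "outdeg \<sigma> x = 1 \<Longrightarrow> e \<in> outE \<sigma> x \<Longrightarrow> outE \<sigma> x = {e}"
  unfolding outdeg_def using finite_outE by (metis card_1_singletonE singletonD)

fun chain :: "('a set \<Rightarrow> 'a) \<Rightarrow> 'a \<Rightarrow> 'a list \<Rightarrow> bool" where
  "chain \<sigma> y [] = False"
| "chain \<sigma> y [x] = ({x, y} \<in> E \<and> \<sigma> {x, y} = y \<and> x \<noteq> y \<and> 2 \<le> outdeg \<sigma> x)"
| "chain \<sigma> y (x # x' # q) = ({x, y} \<in> E \<and> \<sigma> {x, y} = y \<and> x \<noteq> y \<and> outdeg \<sigma> x = 1 \<and> chain \<sigma> x (x' # q))"

fun CE :: "'a \<Rightarrow> 'a list \<Rightarrow> 'a set set" where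
  "CE y [] = {}"
| "CE y (x # q) = insert {x, y} (CE x q)"

lemma CE_sub: "e \<in> CE y p \<Longrightarrow> e \<subseteq> insert y (set p)"
  by (induction p arbitrary: y) auto

lemma chain_transfer:
  "chain \<sigma> y p \<Longrightarrow> (\<forall>z\<in>set p. \<forall>e\<in>E. z \<in> e \<longrightarrow> \<sigma>' e = \<sigma> e) \<Longrightarrow> chain \<sigma>' y p"
proof (induction \<sigma> y p rule: chain.induct)
  case (2 \<sigma> y x)
  have "outE \<sigma>' x = outE \<sigma> x" using 2(2) by (auto simp: outE_def)
  thus ?case using 2 by (auto simp: outdeg_def)
next
  case (3 \<sigma> y x x' q)
  have "outE \<sigma>' x = outE \<sigma> x" using 3(3) by (auto simp: outE_def)
  moreover have "\<sigma>' {x, y} = \<sigma> {x, y}" using 3(2,3) by auto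
  ultimately show ?case using 3 by (auto simp: outdeg_def)
qed simp

lemma outE_agree: "(\<forall>e\<in>E. z \<in> e \<longrightarrow> \<sigma>' e = \<sigma> e) \<Longrightarrow> outE \<sigma>' z = outE \<sigma> z"
  by (auto simp: outE_def)

lemma PL:
  "chain \<sigma> y p \<Longrightarrow> distinct (y # p) \<Longrightarrow> \<sigma> \<in> OR \<Longrightarrow> sinks \<sigma> = {y} \<Longrightarrow>
   \<exists>\<tau>. \<tau> \<in> sink_free_orientations V E \<and> unflip \<tau> y (length p) = \<sigma> \<and> (\<forall>e. e \<notin> CE y p \<longrightarrow> \<tau> e = \<sigma> e)"
proof (induction p arbitrary: \<sigma> y)
  case Nil thus ?case by simp
next
  case (Cons x q)
  define e where "e = {x, y}"
  have eE: "e \<in> E" and se: "\<sigma> e = y" and xy: "x \<noteq> y"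
    using Cons.prems(1) by (cases q; auto simp: e_def)+
  have xe: "x \<in> e" "y \<in> e" by (auto simp: e_def)
  define \<sigma>' where "\<sigma>' = \<sigma>(e := x)"
  have \<sigma>'O: "\<sigma>' \<in> OR" using Cons.prems(3) eE xe by (auto simp: OR_iff \<sigma>'_def)
  have ysink: "is_sink E \<sigma> y" using Cons.prems(4) by (auto simp: sinks_def)
  have F1: "outE \<sigma>' y = {e}"
  proof (intro equalityI subsetI)
    fix e' assume e': "e' \<in> outE \<sigma>' y"
    show "e' \<in> {e}"
    proof (rule ccontr)
      assume "e' \<notin> {e}"
      hence "\<sigma>' e' = \<sigma> e'" by (simp add: \<sigma>'_def)
      moreover have "\<sigma> e' = y" using ysink e' unfolding is_sink_def outE_def by blast
      ultimately show False using e' by (simp add: outE_def)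
    qed
  next
    fix e' assume "e' \<in> {e}"
    thus "e' \<in> outE \<sigma>' y" using eE xe xy by (auto simp: outE_def \<sigma>'_def)
  qed
  have F2: "outE \<sigma>' z = outE \<sigma> z" if "z \<noteq> x" "z \<noteq> y" for z
    by (rule outE_agree) (use that in \<open>auto simp: \<sigma>'_def e_def\<close>)
  have nonsink: "outE \<sigma> z \<noteq> {}" if "z \<in> V" "z \<noteq> y" for z
  proof
    assume "outE \<sigma> z = {}"
    hence "z \<in> sinks \<sigma>" using that by (simp add: sinks_def is_sink_outE)
    thus False using that Cons.prems(4) by simp
  qed
  have hback: "\<sigma>'(e := y) = \<sigma>" using se by (auto simp: \<sigma>'_def)
  show ?case
  proof (cases q)
    case Nil
    have deg2: "2 \<le> outdeg \<sigma> x" using Cons.prems(1) Nil by simp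
    have "outE \<sigma> x - {e} \<subseteq> outE \<sigma>' x" by (auto simp: outE_def \<sigma>'_def)
    moreover have "outE \<sigma> x - {e} \<noteq> {}"
    proof
      assume "outE \<sigma> x - {e} = {}"
      hence "outE \<sigma> x \<subseteq> {e}" by blast
      hence "card (outE \<sigma> x) \<le> card {e}" by (intro card_mono) auto
      hence "card (outE \<sigma> x) \<le> 1" by simp
      thus False using deg2 by (simp add: outdeg_def)
    qed
    ultimately have ox: "outE \<sigma>' x \<noteq> {}" by blast
    have SF: "\<sigma>' \<in> sink_free_orientations V E"
      unfolding SF_iff
    proof (intro conjI \<sigma>'O equals0I)
      fix z assume "z \<in> sinks \<sigma>'"
      hence z: "z \<in> V" "outE \<sigma>' z = {}" by (auto simp: sinks_def is_sink_outE)
      show False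
      proof (cases "z = y")
        case True thus False using z F1 by simp
      next
        case zy: False
        show False
        proof (cases "z = x")
          case True thus False using z ox by simp
        next
          case False thus False using z F2[OF False zy] nonsink[OF z(1) zy] by simp
        qed
      qed
    qed
    have "unflip \<sigma>' y (length (x # q)) = \<sigma>"
      using Nil F1 outE_single[OF F1] hback by (simp add: \<sigma>'_def)
    moreover have "\<forall>e'. e' \<notin> CE y (x # q) \<longrightarrow> \<sigma>' e' = \<sigma> e'"
      using Nil by (auto simp: \<sigma>'_def e_def)
    ultimately show ?thesis using SF by blast
  next
    case (Cons x' q')
    have ch: "chain \<sigma> x q" and deg1: "outdeg \<sigma> x = 1"
      using Cons.prems(1) \<open>q = x' # q'\<close> by auto
    have outx: "outE \<sigma> x = {e}"
      by (rule outdeg1[OF deg1]) (use eE xe se xy in \<open>auto simp: outE_def\<close>)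
    have xV: "x \<in> V" using edge_sub eE xe by blast
    have dq: "distinct (x # q)" "y \<notin> set q" "x \<notin> set q" using Cons.prems(2) by auto
    have sinks': "sinks \<sigma>' = {x}"
    proof (intro equalityI subsetI)
      fix z assume "z \<in> sinks \<sigma>'"
      hence z: "z \<in> V" "outE \<sigma>' z = {}" by (auto simp: sinks_def is_sink_outE)
      show "z \<in> {x}"
      proof (rule ccontr)
        assume zx: "z \<notin> {x}"
        show False
        proof (cases "z = y")
          case True thus False using z F1 by simp
        next
          case False thus False using z F2[of z] zx nonsink[OF z(1) False] by simp
        qed
      qed
    next
      fix z assume "z \<in> {x}"
      hence zx: "z = x" by simp
      have "outE \<sigma>' x = {}"
      proof (rule equals0I)
        fix e' assume e': "e' \<in> outE \<sigma>' x"
        show False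
        proof (cases "e' = e")
          case True thus False using e' by (simp add: outE_def \<sigma>'_def)
        next
          case False
          hence "e' \<in> outE \<sigma> x" using e' by (simp add: outE_def \<sigma>'_def)
          thus False using outx False by simp
        qed
      qed
      thus "z \<in> sinks \<sigma>'" using zx xV by (simp add: sinks_def is_sink_outE)
    qed
    have ch': "chain \<sigma>' x q"
    proof (rule chain_transfer[OF ch], intro ballI impI)
      fix z e' assume z: "z \<in> set q" "e' \<in> E" "z \<in> e'"
      have "e' \<noteq> e" using z dq by (auto simp: e_def)
      thus "\<sigma>' e' = \<sigma> e'" by (simp add: \<sigma>'_def)
    qed
    obtain \<tau> where \<tau>: "\<tau> \<in> sink_free_orientations V E" "unflip \<tau> x (length q) = \<sigma>'"
        "\<forall>e'. e' \<notin> CE x q \<longrightarrow> \<tau> e' = \<sigma>' e'"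
      using Cons.IH[OF ch' dq(1) \<sigma>'O sinks'] by blast
    have ynot: "e' \<notin> CE x q" if "y \<in> e'" for e'
    proof
      assume "e' \<in> CE x q"
      hence "e' \<subseteq> insert x (set q)" by (rule CE_sub)
      thus False using that dq xy by blast
    qed
    have "outE \<tau> y = outE \<sigma>' y"
      by (rule outE_agree) (use \<tau>(3) ynot in blast)
    hence oty: "outE \<tau> y = {e}" using F1 by simp
    have "\<tau> e = x" using \<tau>(3) ynot[OF xe(2)] by (simp add: \<sigma>'_def)
    hence "unflip \<tau> y (length (x # q)) = \<sigma>'(e := y)"
      using outE_single[OF oty] \<tau>(2) by simp
    hence "unflip \<tau> y (length (x # q)) = \<sigma>" using hback by simp
    moreover have "\<forall>e'. e' \<notin> CE y (x # q) \<longrightarrow> \<tau> e' = \<sigma> e'"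
      using \<tau>(3) by (auto simp: \<sigma>'_def e_def)
    ultimately show ?thesis using \<tau>(1) by blast
  qed
qed

end

context sfo begin

definition tl' :: "('a set \<Rightarrow> 'a) \<Rightarrow> 'a set \<Rightarrow> 'a" where
  "tl' \<sigma> e = (THE t. t \<in> e \<and> t \<noteq> \<sigma> e)"

lemma tl'_prop:
  assumes "e \<in> E" "\<sigma> e \<in> e"
  shows "tl' \<sigma> e \<in> e \<and> tl' \<sigma> e \<noteq> \<sigma> e"
proof -
  obtain a b where ab: "e = {a, b}" "a \<noteq> b" using edgeE[OF assms(1)] by blast
  have "\<exists>!t. t \<in> e \<and> t \<noteq> \<sigma> e" using ab assms(2) by auto
  thus ?thesis unfolding tl'_def by (rule theI')
qed

lemma tl'_unique:
  assumes "e \<in> E" "\<sigma> e \<in> e" "t \<in> e" "t \<noteq> \<sigma> e"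
  shows "t = tl' \<sigma> e"
proof -
  obtain a b where ab: "e = {a, b}" "a \<noteq> b" using edgeE[OF assms(1)] by blast
  have "\<exists>!t. t \<in> e \<and> t \<noteq> \<sigma> e" using ab assms(2) by auto
  thus ?thesis unfolding tl'_def using assms(3,4) by (metis (mono_tags, lifting) the_equality)
qed

lemma oe_in: "outE \<sigma> z \<noteq> {} \<Longrightarrow> oe \<sigma> z \<in> outE \<sigma> z"
  unfolding oe_def by (meson ex_in_conv someI_ex)

lemma succ_edge:
  assumes "\<sigma> \<in> OR" "outE \<sigma> z \<noteq> {}"
  shows "{z, succ \<sigma> z} = oe \<sigma> z \<and> oe \<sigma> z \<in> E \<and> succ \<sigma> z \<noteq> z"
proof -
  let ?e = "oe \<sigma> z"
  have e: "?e \<in> E" "z \<in> ?e" "\<sigma> ?e \<noteq> z" using oe_in[OF assms(2)] by (auto simp: outE_def)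
  have se: "\<sigma> ?e \<in> ?e" using assms(1) e(1) by (simp add: OR_iff)
  obtain a b where ab: "?e = {a, b}" "a \<noteq> b" using edgeE[OF e(1)] by blast
  have "{z, \<sigma> ?e} = ?e" using ab e se by auto
  thus ?thesis using e by (simp add: succ_def)
qed

fun build :: "('a set \<Rightarrow> 'a) \<Rightarrow> nat \<Rightarrow> 'a \<Rightarrow> 'a list \<Rightarrow> 'a list" where
  "build \<sigma> 0 z p0 = p0"
| "build \<sigma> (Suc n) z p0 = build \<sigma> n (succ \<sigma> z) (z # p0)"

lemma build_eq: "build \<sigma> n z p0 = rev (map (\<lambda>i. (succ \<sigma> ^^ i) z) [0..<n]) @ p0"
proof (induction n arbitrary: z p0)
  case 0 thus ?case by simp
next
  case (Suc n)
  have "map (\<lambda>i. (succ \<sigma> ^^ i) z) [0..<Suc n] = z # map (\<lambda>i. (succ \<sigma> ^^ i) (succ \<sigma> z)) [0..<n]"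
    by (simp add: map_upt_Suc funpow_swap1 del: upt_Suc)
  thus ?case using Suc.IH by simp
qed

lemma build_chain:
  assumes \<sigma>: "\<sigma> \<in> OR"
  shows "chain \<sigma> z p0 \<Longrightarrow> (\<forall>i<n. outdeg \<sigma> ((succ \<sigma> ^^ i) z) = 1) \<Longrightarrow> chain \<sigma> ((succ \<sigma> ^^ n) z) (build \<sigma> n z p0)"
proof (induction n arbitrary: z p0)
  case 0 thus ?case by simp
next
  case (Suc n)
  have d1: "outdeg \<sigma> z = 1" using Suc.prems(2)[rule_format, of 0] by simp
  hence ne: "outE \<sigma> z \<noteq> {}" by (auto simp: outdeg_def)
  have se: "{z, succ \<sigma> z} = oe \<sigma> z" "oe \<sigma> z \<in> E" "succ \<sigma> z \<noteq> z" using succ_edge[OF \<sigma> ne] by auto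
  obtain x' q where p0: "p0 = x' # q" using Suc.prems(1) by (cases p0) auto
  have "chain \<sigma> (succ \<sigma> z) (z # p0)"
    using p0 se d1 Suc.prems(1) by (simp add: succ_def)
  moreover have "\<forall>i<n. outdeg \<sigma> ((succ \<sigma> ^^ i) (succ \<sigma> z)) = 1"
    using Suc.prems(2) by (auto simp: funpow_swap1[symmetric])
  ultimately have "chain \<sigma> ((succ \<sigma> ^^ n) (succ \<sigma> z)) (build \<sigma> n (succ \<sigma> z) (z # p0))"
    by (rule Suc.IH)
  thus ?case by (simp add: funpow_swap1)
qed

definition RR :: "('a set \<Rightarrow> 'a) \<Rightarrow> 'a \<Rightarrow> 'a set" where
  "RR \<sigma> u = {z. \<exists>n. (succ \<sigma> ^^ n) z = u \<and> (\<forall>i<n. outdeg \<sigma> ((succ \<sigma> ^^ i) z) = 1)}"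

lemma exists_good_edge:
  assumes \<sigma>: "\<sigma> \<in> OR" and su: "sinks \<sigma> = {u}" and \<tau>0: "\<tau>0 \<in> sink_free_orientations V E"
  shows "\<exists>e\<in>E. \<exists>b\<in>RR \<sigma> u. b \<in> e \<and> \<sigma> e = b \<and> 2 \<le> outdeg \<sigma> (tl' \<sigma> e)"
proof (rule ccontr)
  assume nex: "\<not> ?thesis"
  let ?R = "RR \<sigma> u"
  have uV: "u \<in> V" and usink: "is_sink E \<sigma> u" using su by (auto simp: sinks_def)
  have uR: "u \<in> ?R" unfolding RR_def by (rule CollectI, rule exI[of _ 0]) simp
  have outu: "outE \<sigma> u = {}" using usink by (simp add: is_sink_outE)
  have Rne: "t \<in> ?R \<Longrightarrow> t \<noteq> u \<Longrightarrow> outdeg \<sigma> t = 1" for t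
  proof -
    assume t: "t \<in> ?R" "t \<noteq> u"
    then obtain n where n: "(succ \<sigma> ^^ n) t = u" "\<forall>i<n. outdeg \<sigma> ((succ \<sigma> ^^ i) t) = 1"
      by (auto simp: RR_def)
    have "n \<noteq> 0" using n(1) t(2) by (cases n) auto
    thus ?thesis using n(2)[rule_format, of 0] by simp
  qed
  have RV: "?R \<subseteq> V"
  proof
    fix t assume t: "t \<in> ?R"
    show "t \<in> V"
    proof (cases "t = u")
      case True thus ?thesis using uV by simp
    next
      case False
      hence "outE \<sigma> t \<noteq> {}" using Rne[OF t False] by (auto simp: outdeg_def)
      then obtain e where "e \<in> E" "t \<in> e" by (auto simp: outE_def)
      thus ?thesis using edge_sub by blast
    qed
  qed
  have finR: "finite ?R" using RV finV finite_subset by blast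
  have closed: "e \<subseteq> ?R" if e: "e \<in> E" "b \<in> e" "b \<in> ?R" for e b
  proof -
    have se: "\<sigma> e \<in> e" using \<sigma> e(1) by (simp add: OR_iff)
    obtain n where n: "(succ \<sigma> ^^ n) b = u" "\<forall>i<n. outdeg \<sigma> ((succ \<sigma> ^^ i) b) = 1"
      using e(3) by (auto simp: RR_def)
    obtain a where a: "e = {a, b}" "a \<noteq> b" using edgeE[OF e(1)] e(2) by auto
    show ?thesis
    proof (cases "\<sigma> e = b")
      case True
      have ta: "tl' \<sigma> e = a" using tl'_unique[of e \<sigma> a, OF e(1) se] a True by auto
      have "\<not> 2 \<le> outdeg \<sigma> a" using nex e True ta by blast
      moreover have ein: "e \<in> outE \<sigma> a" using e(1) a True by (auto simp: outE_def)
      moreover have "outdeg \<sigma> a \<noteq> 0" using ein finite_outE by (auto simp: outdeg_def)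
      ultimately have d1: "outdeg \<sigma> a = 1" by linarith
      have "outE \<sigma> a = {e}" by (rule outdeg1[OF d1 ein])
      hence sa: "succ \<sigma> a = b" using True by (simp add: succ_def outE_single)
      have "a \<in> ?R" unfolding RR_def
      proof (rule CollectI, rule exI[of _ "Suc n"], intro conjI allI impI)
        show "(succ \<sigma> ^^ Suc n) a = u" using n(1) sa by (simp add: funpow_swap1)
      next
        fix i assume i: "i < Suc n"
        show "outdeg \<sigma> ((succ \<sigma> ^^ i) a) = 1"
        proof (cases i)
          case 0 thus ?thesis using d1 by simp
        next
          case (Suc j)
          hence "(succ \<sigma> ^^ i) a = (succ \<sigma> ^^ j) b" using sa by (simp add: funpow_swap1)
          thus ?thesis using n(2) i Suc by simp
        qed
      qed
      thus ?thesis using a e(3) by auto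
    next
      case False
      hence sea: "\<sigma> e = a" using se a by auto
      have bu: "b \<noteq> u"
      proof
        assume "b = u"
        hence "\<sigma> e = b" using usink e unfolding is_sink_def by blast
        thus False using False by simp
      qed
      have n0: "n \<noteq> 0" using n(1) bu by (cases n) auto
      have d1: "outdeg \<sigma> b = 1" using n(2)[rule_format, of 0] n0 by simp
      have ein: "e \<in> outE \<sigma> b" using e(1,2) False by (auto simp: outE_def)
      have "outE \<sigma> b = {e}" by (rule outdeg1[OF d1 ein])
      hence sb: "succ \<sigma> b = a" using sea by (simp add: succ_def outE_single)
      obtain m where m: "n = Suc m" using n0 by (cases n) auto
      have "a \<in> ?R" unfolding RR_def
      proof (rule CollectI, rule exI[of _ m], intro conjI allI impI)
        show "(succ \<sigma> ^^ m) a = u" using n(1) sb m by (simp add: funpow_swap1)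
      next
        fix i assume i: "i < m"
        have "(succ \<sigma> ^^ i) a = (succ \<sigma> ^^ Suc i) b" using sb by (simp add: funpow_swap1)
        moreover have "outdeg \<sigma> ((succ \<sigma> ^^ Suc i) b) = 1" using n(2)[rule_format, of "Suc i"] i m by simp
        ultimately show "outdeg \<sigma> ((succ \<sigma> ^^ i) a) = 1" by simp
      qed
      thus ?thesis using a e(3) by auto
    qed
  qed
  define ER where "ER = {e\<in>E. e \<subseteq> ?R}"
  have finER: "finite ER" using finE by (simp add: ER_def)
  have \<tau>0O: "\<tau>0 \<in> OR" and \<tau>0s: "sinks \<tau>0 = {}" using \<tau>0 by (auto simp: SF_iff)
  have c1: "card ?R \<le> card ER"
  proof (rule card_inj_on_le[OF _ _ finER])
    show "oe \<tau>0 ` ?R \<subseteq> ER"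
    proof
      fix e assume "e \<in> oe \<tau>0 ` ?R"
      then obtain z where z: "z \<in> ?R" "e = oe \<tau>0 z" by blast
      have "outE \<tau>0 z \<noteq> {}" using \<tau>0s z RV by (auto simp: sinks_def is_sink_outE)
      hence "e \<in> outE \<tau>0 z" using oe_in z by simp
      hence "e \<in> E" "z \<in> e" by (auto simp: outE_def)
      thus "e \<in> ER" using closed z(1) by (auto simp: ER_def)
    qed
    show "inj_on (oe \<tau>0) ?R"
    proof
      fix z z' assume z: "z \<in> ?R" "z' \<in> ?R" "oe \<tau>0 z = oe \<tau>0 z'"
      have "outE \<tau>0 z \<noteq> {}" "outE \<tau>0 z' \<noteq> {}" using \<tau>0s z RV by (auto simp: sinks_def is_sink_outE)
      hence "oe \<tau>0 z \<in> outE \<tau>0 z" "oe \<tau>0 z' \<in> outE \<tau>0 z'" using oe_in by auto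
      hence e: "oe \<tau>0 z \<in> E" "z \<in> oe \<tau>0 z" "\<tau>0 (oe \<tau>0 z) \<noteq> z" "z' \<in> oe \<tau>0 z" "\<tau>0 (oe \<tau>0 z) \<noteq> z'"
        using z(3) by (auto simp: outE_def)
      have se: "\<tau>0 (oe \<tau>0 z) \<in> oe \<tau>0 z" using \<tau>0O e(1) by (simp add: OR_iff)
      show "z = z'" using tl'_unique[of "oe \<tau>0 z" \<tau>0 z, OF e(1) se e(2) not_sym[OF e(3)]] tl'_unique[of "oe \<tau>0 z" \<tau>0 z', OF e(1) se e(4) not_sym[OF e(5)]] by simp
    qed
  qed
  have c2: "card ER \<le> card (?R - {u})"
  proof (rule card_inj_on_le)
    show "finite (?R - {u})" using finR by simp
    show "tl' \<sigma> ` ER \<subseteq> ?R - {u}"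
    proof
      fix t assume "t \<in> tl' \<sigma> ` ER"
      then obtain e where e: "e \<in> ER" "t = tl' \<sigma> e" by blast
      have eE: "e \<in> E" "e \<subseteq> ?R" using e by (auto simp: ER_def)
      have se: "\<sigma> e \<in> e" using \<sigma> eE(1) by (simp add: OR_iff)
      have tp: "t \<in> e" "t \<noteq> \<sigma> e" using tl'_prop[of e \<sigma>, OF eE(1) se] e(2) by auto
      have "t \<noteq> u"
      proof
        assume "t = u"
        hence "\<sigma> e = t" using usink eE(1) tp(1) unfolding is_sink_def by blast
        thus False using tp(2) by simp
      qed
      thus "t \<in> ?R - {u}" using tp eE by auto
    qed
    show "inj_on (tl' \<sigma>) ER"
    proof
      fix e e' assume ee: "e \<in> ER" "e' \<in> ER" "tl' \<sigma> e = tl' \<sigma> e'"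
      have eE: "e \<in> E" "e' \<in> E" "e \<subseteq> ?R" using ee by (auto simp: ER_def)
      have se: "\<sigma> e \<in> e" "\<sigma> e' \<in> e'" using \<sigma> eE by (auto simp: OR_iff)
      define t where "t = tl' \<sigma> e"
      have tp: "t \<in> e" "t \<noteq> \<sigma> e" using tl'_prop[of e \<sigma>, OF eE(1) se(1)] by (auto simp: t_def)
      have tp': "t \<in> e'" "t \<noteq> \<sigma> e'" using tl'_prop[of e' \<sigma>, OF eE(2) se(2)] ee(3) by (auto simp: t_def)
      have tR: "t \<in> ?R" using tp eE by auto
      have tu: "t \<noteq> u"
      proof
        assume "t = u"
        hence "\<sigma> e = t" using usink eE(1) tp(1) unfolding is_sink_def by blast
        thus False using tp(2) by simp
      qed
      have d1: "outdeg \<sigma> t = 1" by (rule Rne[OF tR tu])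
      have "e \<in> outE \<sigma> t" "e' \<in> outE \<sigma> t" using tp tp' eE by (auto simp: outE_def)
      thus "e = e'" using outdeg1[OF d1] by blast
    qed
  qed
  have "card (?R - {u}) = card ?R - 1" using uR finR by simp
  moreover have "card ?R \<ge> 1" using uR finR by (metis One_nat_def Suc_leI card_gt_0_iff empty_iff)
  ultimately show False using c1 c2 by linarith
qed

lemma chain_V: "chain \<sigma> y p \<Longrightarrow> set p \<subseteq> V"
proof (induction \<sigma> y p rule: chain.induct)
  case (2 \<sigma> y x) thus ?case using edge_sub by auto
next
  case (3 \<sigma> y x x' q) thus ?case using edge_sub by auto
qed simp

lemma chain_exists:
  assumes \<sigma>: "\<sigma> \<in> OR" and su: "sinks \<sigma> = {u}" and \<tau>0: "\<tau>0 \<in> sink_free_orientations V E"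
  shows "\<exists>p. chain \<sigma> u p \<and> distinct (u # p)"
proof -
  obtain e b where eb: "e \<in> E" "b \<in> RR \<sigma> u" "b \<in> e" "\<sigma> e = b" "2 \<le> outdeg \<sigma> (tl' \<sigma> e)"
    using exists_good_edge[OF \<sigma> su \<tau>0] by blast
  define x where "x = tl' \<sigma> e"
  have se: "\<sigma> e \<in> e" using \<sigma> eb(1) by (simp add: OR_iff)
  have xp: "x \<in> e" "x \<noteq> b" using tl'_prop[of e \<sigma>, OF eb(1) se] eb(4) by (auto simp: x_def)
  have exb: "e = {x, b}" using edgeE[OF eb(1)] xp eb(3) by auto
  have usink: "outE \<sigma> u = {}" using su by (auto simp: sinks_def is_sink_outE)
  define P where "P = (\<lambda>n. (succ \<sigma> ^^ n) b = u \<and> (\<forall>i<n. outdeg \<sigma> ((succ \<sigma> ^^ i) b) = 1))"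
  have "\<exists>n. P n" using eb(2) by (auto simp: RR_def P_def)
  define n0 where "n0 = (LEAST n. P n)"
  have Pn0: "P n0" unfolding n0_def using \<open>\<exists>n. P n\<close> by (metis LeastI)
  have minim: "(succ \<sigma> ^^ m) b \<noteq> u" if "m < n0" for m
  proof
    assume "(succ \<sigma> ^^ m) b = u"
    hence "P m" using Pn0 that by (auto simp: P_def)
    thus False using not_less_Least[OF that[unfolded n0_def]] by blast
  qed
  have c1: "{x, b} \<in> E" "\<sigma> {x, b} = b" using exb eb(1,4) by auto
  have c2: "2 \<le> outdeg \<sigma> x" using eb(5) by (simp add: x_def)
  have ch0: "chain \<sigma> b [x]" using c1 c2 xp(2) by simp
  have ch: "chain \<sigma> ((succ \<sigma> ^^ n0) b) (build \<sigma> n0 b [x])"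
    by (rule build_chain[OF \<sigma> ch0]) (use Pn0 in \<open>simp add: P_def\<close>)
  hence ch': "chain \<sigma> u (build \<sigma> n0 b [x])" using Pn0 by (simp add: P_def)
  define g where "g = (\<lambda>i. (succ \<sigma> ^^ i) b)"
  have inj: "inj_on g {0..<n0}"
  proof
    fix i j assume ij: "i \<in> {0..<n0}" "j \<in> {0..<n0}" "g i = g j"
    show "i = j"
    proof (rule ccontr)
      assume "i \<noteq> j"
      then consider "i < j" | "j < i" by linarith
      thus False
      proof cases
        case 1
        have "(succ \<sigma> ^^ (n0 - j)) (g i) = (succ \<sigma> ^^ (n0 - j)) (g j)" using ij by simp
        hence "(succ \<sigma> ^^ (n0 - j + i)) b = (succ \<sigma> ^^ (n0 - j + j)) b" by (simp add: g_def funpow_add)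
        hence "(succ \<sigma> ^^ (n0 - j + i)) b = u" using Pn0 ij by (simp add: P_def)
        moreover have "n0 - j + i < n0" using 1 ij(2) by auto
        ultimately show False using minim by blast
      next
        case 2
        have "(succ \<sigma> ^^ (n0 - i)) (g j) = (succ \<sigma> ^^ (n0 - i)) (g i)" using ij by simp
        hence "(succ \<sigma> ^^ (n0 - i + j)) b = (succ \<sigma> ^^ (n0 - i + i)) b" by (simp add: g_def funpow_add)
        hence "(succ \<sigma> ^^ (n0 - i + j)) b = u" using Pn0 ij by (simp add: P_def)
        moreover have "n0 - i + j < n0" using 2 ij(1) by auto
        ultimately show False using minim by blast
      qed
    qed
  qed
  have gdeg: "outdeg \<sigma> (g i) = 1" if "i < n0" for i using Pn0 that by (simp add: P_def g_def)
  have xg: "x \<notin> g ` {0..<n0}"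
  proof
    assume "x \<in> g ` {0..<n0}"
    then obtain i where "i < n0" "x = g i" by auto
    thus False using gdeg eb(5) by (simp add: x_def)
  qed
  have ug: "u \<notin> g ` {0..<n0}"
  proof
    assume "u \<in> g ` {0..<n0}"
    then obtain i where "i < n0" "u = g i" by auto
    thus False using minim[of i] by (simp add: g_def)
  qed
  have xu: "x \<noteq> u" using eb(5) usink by (auto simp: x_def outdeg_def)
  have beq: "build \<sigma> n0 b [x] = rev (map g [0..<n0]) @ [x]" by (simp add: build_eq g_def)
  have "distinct (u # build \<sigma> n0 b [x])"
    unfolding beq using inj xg ug xu by (auto simp: distinct_map)
  thus ?thesis using ch' by blast
qed

lemma Zu_bound:
  assumes SF: "sink_free_orientations V E \<noteq> {}"
  shows "Zu u \<le> card (sink_free_orientations V E) * card V"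
proof -
  let ?S = "sink_free_orientations V E"
  obtain \<tau>0 where \<tau>0: "\<tau>0 \<in> ?S" using SF by blast
  have sub: "{\<sigma>\<in>OR. sinks \<sigma> = {u}} \<subseteq> (\<lambda>(\<tau>, k). unflip \<tau> u k) ` (?S \<times> {1..card V})"
  proof
    fix \<sigma> assume "\<sigma> \<in> {\<sigma>\<in>OR. sinks \<sigma> = {u}}"
    hence \<sigma>: "\<sigma> \<in> OR" "sinks \<sigma> = {u}" by auto
    obtain p where p: "chain \<sigma> u p" "distinct (u # p)" using chain_exists[OF \<sigma> \<tau>0] by blast
    obtain \<tau> where \<tau>: "\<tau> \<in> ?S" "unflip \<tau> u (length p) = \<sigma>" using PL[OF p \<sigma>] by blast
    have uV: "u \<in> V" using \<sigma>(2) by (auto simp: sinks_def)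
    have "set (u # p) \<subseteq> V" using chain_V[OF p(1)] uV by auto
    hence "card (set (u # p)) \<le> card V" by (rule card_mono[OF finV])
    hence "length (u # p) \<le> card V" using distinct_card[OF p(2)] by simp
    moreover have "p \<noteq> []" using p(1) by auto
    ultimately have "length p \<in> {1..card V}" by (cases p) auto
    thus "\<sigma> \<in> (\<lambda>(\<tau>, k). unflip \<tau> u k) ` (?S \<times> {1..card V})" using \<tau> by force
  qed
  have "Zu u \<le> card ((\<lambda>(\<tau>, k). unflip \<tau> u k) ` (?S \<times> {1..card V}))"
    unfolding Zu_def by (rule card_mono[OF _ sub]) (use finite_SF in auto)
  also have "\<dots> \<le> card (?S \<times> {1..card V})" by (rule card_image_le) (use finite_SF in auto)
  also have "\<dots> = card ?S * card V" by (simp add: card_cartesian_product)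
  finally show ?thesis .
qed

end

lemma prob_ex: "measure_pmf.prob M A = ex M (\<lambda>x. if x \<in> A then 1 else 0)"
proof -
  have "(\<lambda>x. if x \<in> A then 1 else 0 :: real) = indicator A" by (auto simp: indicator_def)
  thus ?thesis unfolding ex_def by (simp add: measure_pmf.emeasure_eq_measure)
qed

context sfo begin

lemma handshake: "(\<Sum>u\<in>V. degree E u) = 2 * card E"
proof -
  have "(\<Sum>u\<in>V. degree E u) = (\<Sum>u\<in>V. \<Sum>e\<in>E. if u \<in> e then 1 else 0)"
    unfolding degree_def using finE by (intro sum.cong) (auto simp: sum.inter_filter[symmetric])
  also have "\<dots> = (\<Sum>e\<in>E. \<Sum>u\<in>V. if u \<in> e then 1 else 0)" by (rule sum.swap)
  also have "\<dots> = (\<Sum>e\<in>E. 2)"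
  proof (rule sum.cong[OF refl])
    fix e assume e: "e \<in> E"
    have "(\<Sum>u\<in>V. if u \<in> e then 1 else 0) = card {u\<in>V. u \<in> e}"
      using finV by (simp add: sum.inter_filter[symmetric])
    also have "{u\<in>V. u \<in> e} = e" using edge_sub[OF e] by auto
    finally show "(\<Sum>u\<in>V. if u \<in> e then 1 else 0) = (2::nat)" using card_edge[OF e] by simp
  qed
  finally show ?thesis by simp
qed

lemma sum_costh:
  assumes "hinv h" and sel: "\<forall>h. has_sink V E (hd h) \<longrightarrow> sel h \<in> V \<and> is_sink E (hd h) (sel h)"
  shows "(\<Sum>u\<in>V. w u * costh sel (ind u) h) = (\<Sum>i\<in>{1..<length h}. w (sel (drop i h)))"
proof -
  have "(\<Sum>u\<in>V. w u * costh sel (ind u) h) = (\<Sum>u\<in>V. \<Sum>i\<in>{1..<length h}. w u * ind u (sel (drop i h)))"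
    by (simp add: costh_def sum_distrib_left)
  also have "\<dots> = (\<Sum>i\<in>{1..<length h}. \<Sum>u\<in>V. w u * ind u (sel (drop i h)))" by (rule sum.swap)
  also have "\<dots> = (\<Sum>i\<in>{1..<length h}. w (sel (drop i h)))"
  proof (rule sum.cong[OF refl])
    fix i assume i: "i \<in> {1..<length h}"
    have "has_sink V E (hd (drop i h))" using assms(1) i by (simp add: hinv_def)
    hence sV: "sel (drop i h) \<in> V" using sel by blast
    have "(\<Sum>u\<in>V. w u * ind u (sel (drop i h))) = (\<Sum>u\<in>V. if u = sel (drop i h) then w u else 0)"
      by (rule sum.cong) (auto simp: ind_def)
    also have "\<dots> = w (sel (drop i h))" using sV finV by (simp add: sum.delta')
    finally show "(\<Sum>u\<in>V. w u * ind u (sel (drop i h))) = w (sel (drop i h))" .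
  qed
  finally show ?thesis .
qed

lemma main_cost:
  assumes SF: "sink_free_orientations V E \<noteq> {}"
    and sel: "\<forall>h. has_sink V E (hd h) \<longrightarrow> sel h \<in> V \<and> is_sink E (hd h) (sel h)"
    and w: "\<And>u. 0 \<le> w u"
  shows "ex (sp_hist V E sel j) (\<lambda>h. \<Sum>i\<in>{1..<length h}. w (sel (drop i h))) \<le> real (card V) * (\<Sum>u\<in>V. w u)"
proof -
  let ?M = "sp_hist V E sel j"
  have fin: "finite (set_pmf ?M)" by (rule finite_sp_hist)
  have cpos: "0 < card (sink_free_orientations V E)" using SF finite_SF by (simp add: card_gt_0_iff)
  have "ex ?M (\<lambda>h. \<Sum>i\<in>{1..<length h}. w (sel (drop i h))) = ex ?M (\<lambda>h. \<Sum>u\<in>V. w u * costh sel (ind u) h)"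
    by (rule ex_cong) (use sum_costh[OF _ sel] sp_hist_inv in auto)
  also have "\<dots> = (\<Sum>u\<in>V. w u * ex ?M (costh sel (ind u)))"
    by (simp add: ex_sum[OF fin] ex_cmult)
  also have "\<dots> \<le> (\<Sum>u\<in>V. w u * real (card V))"
  proof (rule sum_mono)
    fix u assume "u \<in> V"
    have "ex ?M (costh sel (ind u)) \<le> real (Zu u) / real (card (sink_free_orientations V E))"
      by (rule cost_u[OF SF sel])
    also have "\<dots> \<le> real (card V)"
    proof -
      have "real (Zu u) \<le> real (card (sink_free_orientations V E) * card V)"
        using Zu_bound[OF SF, of u] by (simp only: of_nat_le_iff)
      thus ?thesis using cpos by (simp add: field_simps mult.commute)
    qed
    finally show "w u * ex ?M (costh sel (ind u)) \<le> w u * real (card V)"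
      using w by (intro mult_left_mono) auto
  qed
  also have "\<dots> = real (card V) * (\<Sum>u\<in>V. w u)" by (simp add: sum_distrib_right mult.commute)
  finally show ?thesis .
qed

end

theorem mainTheorem10:
  fixes V :: "'a set" and E :: "'a set set"
    and sel :: "('a set \<Rightarrow> 'a) list \<Rightarrow> 'a"
  assumes "simple_graph V E"
    and "sink_free_orientations V E \<noteq> {}"
    and "\<forall>h. has_sink V E (hd h) \<longrightarrow> sel h \<in> V \<and> is_sink E (hd h) (sel h)"
  shows "((\<lambda>k. measure_pmf.prob (sp_hist V E sel k) {h. \<not> has_sink V E (hd h)})
           \<longlonglongrightarrow> 1)
    \<and> (\<forall>\<sigma>\<in>sink_free_orientations V E.
           (\<lambda>k. measure_pmf.prob (sp_hist V E sel k) {h. \<not> has_sink V E (hd h) \<and> hd h = \<sigma>})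
             \<longlonglongrightarrow> 1 / real (card (sink_free_orientations V E)))
    \<and> (\<forall>k. measure_pmf.expectation (sp_hist V E sel k) (\<lambda>h. real (length h - 1))
           \<le> real (card V) ^ 2)
    \<and> (\<forall>k. measure_pmf.expectation (sp_hist V E sel k) (\<lambda>h. real (reorientations E sel h))
           \<le> 2 * real (card V) * real (card E))"
proof -
  interpret sfo V E by standard (rule assms(1))
  note SF = assms(2) and sel = assms(3)
  define f0 where "f0 = fu undefined"
  have vf: "valid f0" unfolding f0_def by (rule valid_fu)
  let ?S = "sink_free_orientations V E"
  have cpos: "0 < card ?S" using SF finite_SF by (simp add: card_gt_0_iff)
  have phit0: "\<And>\<sigma> a. has_sink V E \<sigma> \<Longrightarrow> phit \<sigma> a = 0" by (simp add: phit_def)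
  have finro: "finite (set_pmf (random_orientation E))" using finOR by (simp add: set_ro)
  have hterm: "measure_pmf.prob (sp_hist V E sel k) {h. \<not> has_sink V E (hd h)} = ex (random_orientation E) (Pt f0 k)" for k
  proof -
    have "measure_pmf.prob (sp_hist V E sel k) {h. \<not> has_sink V E (hd h)} =
          ex (sp_hist V E sel k) (\<lambda>h. val f0 (\<lambda>_. 0) phit 0 (hd h) (costh sel (\<lambda>_. 0) h))"
      unfolding prob_ex by (rule ex_cong) (simp add: phit_def)
    also have "\<dots> = ex (random_orientation E) (\<lambda>\<sigma>. val f0 (\<lambda>_. 0) phit (k + 0) \<sigma> 0)"
      by (rule bridge[OF vf phit0 sel])
    also have "\<dots> = ex (random_orientation E) (Pt f0 k)" by (rule ex_cong) (simp add: Pt_def)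
    finally show ?thesis .
  qed
  have Ptb: "1 - (1 - dd) ^ (k div NN) \<le> ex (random_orientation E) (Pt f0 k) \<and> ex (random_orientation E) (Pt f0 k) \<le> 1" for k
  proof
    have "ex (random_orientation E) (\<lambda>_. 1 - (1 - dd) ^ (k div NN)) \<le> ex (random_orientation E) (Pt f0 k)"
    proof (rule ex_mono[OF finro])
      fix x assume "x \<in> set_pmf (random_orientation E)"
      hence "x \<in> OR" by (simp add: set_ro)
      thus "1 - (1 - dd) ^ (k div NN) \<le> Pt f0 k x" using Pt_decay[OF vf SF, of x k] by simp
    qed
    thus "1 - (1 - dd) ^ (k div NN) \<le> ex (random_orientation E) (Pt f0 k)" by (simp add: ex_const)
    have "ex (random_orientation E) (Pt f0 k) \<le> ex (random_orientation E) (\<lambda>_. 1)"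
    proof (rule ex_mono[OF finro])
      fix x assume "x \<in> set_pmf (random_orientation E)"
      hence "x \<in> OR" by (simp add: set_ro)
      thus "Pt f0 k x \<le> 1" using Pt_bounds[of x f0 k] by simp
    qed
    thus "ex (random_orientation E) (Pt f0 k) \<le> 1" by (simp add: ex_const)
  qed
  have Plim: "(\<lambda>k. ex (random_orientation E) (Pt f0 k)) \<longlonglongrightarrow> 1"
  proof (rule tendsto_sandwich[of "\<lambda>k. 1 - (1 - dd) ^ (k div NN)" _ _ "\<lambda>_. 1"])
    show "\<forall>\<^sub>F k in sequentially. 1 - (1 - dd) ^ (k div NN) \<le> ex (random_orientation E) (Pt f0 k)"
      using Ptb by simp
    show "\<forall>\<^sub>F k in sequentially. ex (random_orientation E) (Pt f0 k) \<le> 1" using Ptb by simp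
    show "(\<lambda>k. 1 - (1 - dd) ^ (k div NN)) \<longlonglongrightarrow> 1"
      using tendsto_diff[OF tendsto_const eps_lim, of 1] by simp
  qed simp
  have part1: "(\<lambda>k. measure_pmf.prob (sp_hist V E sel k) {h. \<not> has_sink V E (hd h)}) \<longlonglongrightarrow> 1"
    unfolding hterm by (rule Plim)
  have part2: "(\<lambda>k. measure_pmf.prob (sp_hist V E sel k) {h. \<not> has_sink V E (hd h) \<and> hd h = \<tau>})
             \<longlonglongrightarrow> 1 / real (card ?S)" if \<tau>: "\<tau> \<in> ?S" for \<tau>
  proof -
    define ph where "ph = (\<lambda>\<sigma> (a::real). if \<sigma> = \<tau> then (1::real) else 0)"
    have \<tau>': "\<tau> \<in> OR" "\<not> has_sink V E \<tau>" using \<tau> by (auto simp: sink_free_orientations_def)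
    have ph0: "\<And>\<sigma> a. has_sink V E \<sigma> \<Longrightarrow> ph \<sigma> a = 0" using \<tau>' by (auto simp: ph_def)
    have eq1: "measure_pmf.prob (sp_hist V E sel k) {h. \<not> has_sink V E (hd h) \<and> hd h = \<tau>} = pmf (law f0 k) \<tau>" for k
    proof -
      have "measure_pmf.prob (sp_hist V E sel k) {h. \<not> has_sink V E (hd h) \<and> hd h = \<tau>} =
            ex (sp_hist V E sel k) (\<lambda>h. val f0 (\<lambda>_. 0) ph 0 (hd h) (costh sel (\<lambda>_. 0) h))"
        unfolding prob_ex by (rule ex_cong) (use \<tau>' in \<open>auto simp: ph_def\<close>)
      also have "\<dots> = ex (random_orientation E) (\<lambda>\<sigma>. val f0 (\<lambda>_. 0) ph (k + 0) \<sigma> 0)"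
        by (rule bridge[OF vf ph0 sel])
      also have "\<dots> = ex (law f0 (0 + k)) (\<lambda>\<sigma>. ph \<sigma> 0)"
        using val_law[OF vf ph0, where s=0 and n=k] by simp
      also have "\<dots> = (\<Sum>\<sigma>\<in>OR. pmf (law f0 k) \<sigma> * ph \<sigma> 0)"
        using ex_finite_sum[OF finOR set_law] by simp
      also have "\<dots> = pmf (law f0 k) \<tau>"
      proof -
        have "(\<Sum>\<sigma>\<in>OR. pmf (law f0 k) \<sigma> * ph \<sigma> 0) = (\<Sum>\<sigma>\<in>OR. if \<sigma> = \<tau> then pmf (law f0 k) \<sigma> else 0)"
          by (rule sum.cong) (auto simp: ph_def)
        also have "\<dots> = pmf (law f0 k) \<tau>" using \<tau>'(1) finOR by (simp add: sum.delta')
        finally show ?thesis .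
      qed
      finally show ?thesis .
    qed
    have eq2: "ex (random_orientation E) (Pt f0 k) = real (card ?S) * pmf (law f0 k) \<tau>" for k
    proof -
      have "ex (random_orientation E) (Pt f0 k) = ex (random_orientation E) (\<lambda>\<sigma>. val f0 (\<lambda>_. 0) phit k \<sigma> 0)"
        by (rule ex_cong) (simp add: Pt_def)
      also have "\<dots> = ex (law f0 (0 + k)) (\<lambda>\<sigma>. phit \<sigma> 0)"
        using val_law[OF vf phit0, where s=0 and n=k] by simp
      also have "\<dots> = (\<Sum>\<sigma>\<in>OR. pmf (law f0 k) \<sigma> * phit \<sigma> 0)"
        using ex_finite_sum[OF finOR set_law] by simp
      also have "\<dots> = (\<Sum>\<sigma>\<in>OR. if \<sigma> \<in> ?S then pmf (law f0 k) \<sigma> else 0)"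
        by (rule sum.cong) (auto simp: phit_def sink_free_orientations_def)
      also have "\<dots> = (\<Sum>\<sigma>\<in>?S. pmf (law f0 k) \<sigma>)"
        by (subst sum.inter_filter[symmetric, OF finOR]) (auto simp: sink_free_orientations_def intro!: sum.cong)
      also have "\<dots> = (\<Sum>\<sigma>\<in>?S. pmf (law f0 k) \<tau>)"
      proof (rule sum.cong[OF refl])
        fix \<sigma> assume "\<sigma> \<in> ?S"
        thus "pmf (law f0 k) \<sigma> = pmf (law f0 k) \<tau>" unfolding f0_def
          by (intro law_I1) (use \<tau> in \<open>auto simp: SF_iff\<close>)
      qed
      also have "\<dots> = real (card ?S) * pmf (law f0 k) \<tau>" by simp
      finally show ?thesis .
    qed
    have "(\<lambda>k. ex (random_orientation E) (Pt f0 k) / real (card ?S)) \<longlonglongrightarrow> 1 / real (card ?S)"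
      by (intro tendsto_intros Plim) (use cpos in simp)
    moreover have "ex (random_orientation E) (Pt f0 k) / real (card ?S) = pmf (law f0 k) \<tau>" for k
      using eq2[of k] cpos by simp
    ultimately show ?thesis unfolding eq1 by simp
  qed
  have part3: "measure_pmf.expectation (sp_hist V E sel k) (\<lambda>h. real (length h - 1)) \<le> real (card V) ^ 2" for k
  proof -
    have "measure_pmf.expectation (sp_hist V E sel k) (\<lambda>h. real (length h - 1)) =
          ex (sp_hist V E sel k) (\<lambda>h. \<Sum>i\<in>{1..<length h}. (\<lambda>_. 1::real) (sel (drop i h)))"
      unfolding ex_def by simp
    also have "\<dots> \<le> real (card V) * (\<Sum>u\<in>V. 1)"
      by (rule main_cost[OF SF sel]) simp
    finally show ?thesis by (simp add: power2_eq_square)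
  qed
  have part4: "measure_pmf.expectation (sp_hist V E sel k) (\<lambda>h. real (reorientations E sel h)) \<le> 2 * real (card V) * real (card E)" for k
  proof -
    have "measure_pmf.expectation (sp_hist V E sel k) (\<lambda>h. real (reorientations E sel h)) =
          ex (sp_hist V E sel k) (\<lambda>h. \<Sum>i\<in>{1..<length h}. (\<lambda>u. real (degree E u)) (sel (drop i h)))"
      unfolding ex_def reorientations_def by simp
    also have "\<dots> \<le> real (card V) * (\<Sum>u\<in>V. real (degree E u))"
      by (rule main_cost[OF SF sel]) simp
    also have "(\<Sum>u\<in>V. real (degree E u)) = 2 * real (card E)"
      using handshake by (simp flip: of_nat_sum)
    finally show ?thesis by simp
  qed
  show ?thesis using part1 part2 part3 part4 by blast
qed


end
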